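(* (a) For all $t>0$, $|E(t)|<M(t)$. (b) There exist $t_0,t_1$ with $0<t_1<t_0<1$ such that $M(t)<\operatorname{arccot}t$ for all $t>t_0$ and $|E(t)|<\operatorname{arccot}t$ for all $t>t_1$. (c) For all $t\geq0$, $|\mathrm{si}(t)|\leq\operatorname{arccot}t$, with equality only for $t=0$.
   Context: For $t>0$, $E(t)=\int_0^\infty \frac{e^{iu}}{u+t}\,du$ (improper integral) and $M(t)=\int_0^\infty \frac{e^{-tu}}{\sqrt{u^2+1}}\,du$. The complementary sine integral is $\mathrm{si}(t)=-\int_t^\infty\frac{\sin u}{u}\,du$ for $t\ge0$ (so $\mathrm{si}(0)=-\pi/2$). *)

theory Defs
  imports "HOL-Analysis.Analysis"
begin

definition E :: "real \<Rightarrow> complex" where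
  "E t = Lim at_top (\<lambda>R::real. integral {0..R} (\<lambda>u::real. exp (\<i> * of_real u) / of_real (u + t)))"

text \<open>M(t) = integral over [0,oo) of e^{-tu}/sqrt(u^2+1) (absolutely convergent for t>0).\<close>
definition M :: "real \<Rightarrow> real" where
  "M t = integral {0..} (\<lambda>u::real. exp (- t * u) / sqrt (u\<^sup>2 + 1))"

definition si :: "real \<Rightarrow> real" where
  "si t = - Lim at_top (\<lambda>R::real. integral {t..R} (\<lambda>u::real. sin u / u))"

text \<open>Principal inverse cotangent, values in (0,pi); equals arctan(1/t) for t>0, pi/2 at 0.\<close>
definition arccot :: "real \<Rightarrow> real" where
  "arccot t = pi / 2 - arctan t"

end

theory Submission
  imports Defs "HOL-Probability.Sinc_Integral" "HOL-Real_Asymp.Real_Asymp"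
begin

section \<open>Generic facts on integrals over half-lines\<close>

lemma closed_Ici_lebesgue: "{a::real..} \<in> sets lebesgue"
  by (intro sets_completionI_sets) simp

lemma lap_absint:
  fixes f :: "real \<Rightarrow> 'b::euclidean_space" and t C :: real
  assumes f: "continuous_on {a..} f" and t: "t > 0"
    and le: "\<And>x. x \<ge> a \<Longrightarrow> norm (f x) \<le> C * exp (-t*x)"
  shows "f absolutely_integrable_on {a..}"
proof (rule measurable_bounded_by_integrable_imp_absolutely_integrable)
  show "f \<in> borel_measurable (lebesgue_on {a..})"
    by (rule continuous_imp_measurable_on_sets_lebesgue[OF f closed_Ici_lebesgue])
  show "(\<lambda>x. C * exp (-t*x)) integrable_on {a..}"
    using integrable_on_cmult_left[OF integrable_on_exp_minus_to_infinity[OF t, of a], of C]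
    by simp
qed (use le closed_Ici_lebesgue in auto)

lemma lap_int:
  fixes f :: "real \<Rightarrow> 'b::euclidean_space" and t C :: real
  assumes f: "continuous_on {a..} f" and t: "t > 0"
    and le: "\<And>x. x \<ge> a \<Longrightarrow> norm (f x) \<le> C * exp (-t*x)"
  shows "f integrable_on {a..}"
  using lap_absint[OF assms] absolutely_integrable_on_def by blast

lemma exp_int_Ici:
  fixes t C a :: real
  assumes t: "t > 0"
  shows "((\<lambda>x. C * exp (-t*x)) has_integral C * exp (-t*a) / t) {a..}"
  using has_integral_mult_right[OF has_integral_exp_minus_to_infinity[OF t, of a], of C]
  by simp

lemma lap_bound:
  fixes f :: "real \<Rightarrow> 'b::euclidean_space" and t C :: real
  assumes f: "continuous_on {a..} f" and t: "t > 0"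
    and le: "\<And>x. x \<ge> a \<Longrightarrow> norm (f x) \<le> C * exp (-t*x)"
  shows "norm (integral {a..} f) \<le> C * exp (-t*a) / t"
proof -
  have "norm (integral {a..} f) \<le> integral {a..} (\<lambda>x. C * exp (-t*x))"
    by (rule integral_norm_bound_integral[OF lap_int[OF assms]])
       (use exp_int_Ici[OF t] le in auto)
  also have "\<dots> = C * exp (-t*a) / t"
    using exp_int_Ici[OF t] by (rule integral_unique)
  finally show ?thesis .
qed

lemma Ici_split:
  fixes f :: "real \<Rightarrow> 'b::euclidean_space"
  assumes f: "f integrable_on {a..b}" "f integrable_on {b..}" and ab: "a \<le> b"
  shows "integral {a..} f = integral {a..b} f + integral {b..} f"
proof -
  have "(f has_integral (integral {a..b} f + integral {b..} f)) ({a..b} \<union> {b..})"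
  proof (rule has_integral_Un)
    have "{a..b} \<inter> {b..} = {b}" using ab by auto
    then show "negligible ({a..b} \<inter> {b..})" by simp
  qed (use f in auto)
  moreover have "{a..b} \<union> {b..} = {a..}" using ab by auto
  moreover have "{a..b} \<inter> {b..} = {b}" using ab by auto
  ultimately show ?thesis by (metis integral_unique)
qed

lemma lap_tendsto:
  fixes f :: "real \<Rightarrow> 'b::euclidean_space" and t C :: real
  assumes f: "continuous_on {a..} f" and t: "t > 0"
    and le: "\<And>x. x \<ge> a \<Longrightarrow> norm (f x) \<le> C * exp (-t*x)"
  shows "((\<lambda>y. integral {a..y} f) \<longlongrightarrow> integral {a..} f) at_top"
proof -
  have "((\<lambda>y. integral {a..y} f - integral {a..} f) \<longlongrightarrow> 0) at_top"
  proof (rule Lim_null_comparison)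
    show "\<forall>\<^sub>F y in at_top. norm (integral {a..y} f - integral {a..} f) \<le> C * exp (-t*y) / t"
      using eventually_ge_at_top[of a]
    proof eventually_elim
      case (elim y)
      have fy: "continuous_on {y..} f" using f elim by (auto intro: continuous_on_subset)
      have i1: "f integrable_on {a..y}"
        using f elim by (intro integrable_continuous_interval) (auto intro: continuous_on_subset)
      have i2: "f integrable_on {y..}"
        by (rule lap_int[OF fy t, where C=C]) (use le elim in auto)
      have "integral {a..} f = integral {a..y} f + integral {y..} f"
        by (rule Ici_split[OF i1 i2 elim])
      then have "norm (integral {a..y} f - integral {a..} f) = norm (integral {y..} f)"
        by (simp add: norm_minus_commute)
      also have "\<dots> \<le> C * exp (-t*y) / t"
        by (rule lap_bound[OF fy t, where C=C]) (use le elim in auto)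
      finally show ?case .
    qed
    show "((\<lambda>y. C * exp (-t*y) / t) \<longlongrightarrow> 0) at_top"
      using t by real_asymp
  qed
  then show ?thesis by (simp add: LIM_zero_iff)
qed

lemma ftc_integral:
  fixes f F :: "real \<Rightarrow> 'a::banach"
  assumes "a \<le> b" "\<And>x. x \<in> {a..b} \<Longrightarrow> (F has_vector_derivative f x) (at x within {a..b})"
  shows "integral {a..b} f = F b - F a"
  using fundamental_theorem_of_calculus[OF assms] by (rule integral_unique)

lemma swap_ivl:
  fixes f :: "real \<Rightarrow> real \<Rightarrow> 'c::banach"
  assumes "continuous_on ({a..b} \<times> {c..d}) (\<lambda>(x,y). f x y)"
  shows "integral {a..b} (\<lambda>x. integral {c..d} (f x)) = integral {c..d} (\<lambda>y. integral {a..b} (\<lambda>x. f x y))"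
  using integral_swap_continuous[of a c b d f] assms
  by (simp add: cbox_Pair_eq)

section \<open>Laplace transform of sinc\<close>

lemma abs_sinc_le: "\<bar>sinc x\<bar> \<le> 1"
proof (cases "x = 0")
  case False
  then show ?thesis using abs_sin_x_le_abs_x[of x] by (simp add: abs_divide divide_le_eq_1)
qed simp

lemma int_exp_sin:
  fixes s X :: real
  assumes s: "s > 0" and X: "X \<ge> 0"
  shows "integral {0..X} (\<lambda>x. exp (-(s*x)) * sin x) = (1 - exp (-(s*X)) * (s * sin X + cos X)) / (1 + s^2)"
proof -
  let ?F = "\<lambda>x. - exp (-(s*x)) * (s * sin x + cos x) / (1 + s^2)"
  have "integral {0..X} (\<lambda>x. exp (-(s*x)) * sin x) = ?F X - ?F 0"
  proof (rule ftc_integral[OF X])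
    fix x assume "x \<in> {0..X}"
    have "1 + s^2 \<noteq> 0" by (metis add_nonneg_eq_0_iff zero_le_power2 zero_neq_one zero_le_one)
    then show "(?F has_vector_derivative exp (-(s*x)) * sin x) (at x within {0..X})"
      by (auto intro!: derivative_eq_intros simp: has_real_derivative_iff_has_vector_derivative[symmetric])
         (simp_all add: field_simps power2_eq_square)
  qed
  moreover have "1 + s^2 > 0" by (simp add: add_pos_nonneg)
  ultimately show ?thesis by (simp add: field_simps)
qed

lemma int_exp_Icc:
  fixes s X :: real
  assumes s: "s > 0" and X: "X \<ge> 0"
  shows "integral {0..X} (\<lambda>x. exp (-(s*x))) = (1 - exp (-(s*X))) / s"
proof -
  let ?F = "\<lambda>x. - exp (-(s*x)) / s"
  have "integral {0..X} (\<lambda>x. exp (-(s*x))) = ?F X - ?F 0"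
    by (rule ftc_integral[OF X])
       (use s in \<open>auto intro!: derivative_eq_intros simp: has_real_derivative_iff_has_vector_derivative[symmetric]\<close>)
  then show ?thesis using s by (simp add: field_simps)
qed

lemma int_exp_Icc_le:
  fixes s X :: real
  assumes s: "s > 0" and X: "X \<ge> 0"
  shows "integral {0..X} (\<lambda>x. exp (-(s*x))) \<le> 1 / s"
  unfolding int_exp_Icc[OF assms] using s by (intro divide_right_mono) auto

lemma sinc_swap:
  fixes t U X :: real
  assumes t: "t > 0" and U: "U \<ge> 0" and X: "X \<ge> 0"
  shows "integral {0..X} (\<lambda>x. exp (-(t*x)) * sinc x * (1 - exp (-(U*x))))
       = integral {0..U} (\<lambda>u. (1 - exp (-((t+u)*X)) * ((t+u) * sin X + cos X)) / (1 + (t+u)^2))"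
proof -
  let ?f = "\<lambda>x u. exp (-((t+u)*x)) * sin x"
  have cont: "continuous_on ({0..X} \<times> {0..U}) (\<lambda>(x,u). ?f x u)"
    unfolding case_prod_unfold by (intro continuous_intros)
  have inner_u: "integral {0..U} (?f x) = exp (-(t*x)) * sinc x * (1 - exp (-(U*x)))"
    if x: "x \<in> {0..X}" for x
  proof (cases "x = 0")
    case True then show ?thesis by simp
  next
    case False
    with x have xp: "x > 0" by auto
    let ?F = "\<lambda>u. - exp (-((t+u)*x)) * sin x / x"
    have "integral {0..U} (?f x) = ?F U - ?F 0"
      by (rule ftc_integral[OF U])
         (use xp in \<open>auto intro!: derivative_eq_intros simp: has_real_derivative_iff_has_vector_derivative[symmetric]\<close>)
    also have "\<dots> = exp (-(t*x)) * sinc x * (1 - exp (-(U*x)))"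
      using xp by (simp add: field_simps exp_add[symmetric] exp_diff)
    finally show ?thesis .
  qed
  have inner_x: "integral {0..X} (\<lambda>x. ?f x u) = (1 - exp (-((t+u)*X)) * ((t+u) * sin X + cos X)) / (1 + (t+u)^2)"
    if u: "u \<in> {0..U}" for u
    using int_exp_sin[of "t+u" X] t u X by auto
  have "integral {0..X} (\<lambda>x. exp (-(t*x)) * sinc x * (1 - exp (-(U*x)))) = integral {0..X} (\<lambda>x. integral {0..U} (?f x))"
    by (rule integral_cong) (use inner_u in auto)
  also have "\<dots> = integral {0..U} (\<lambda>u. integral {0..X} (\<lambda>x. ?f x u))"
    by (rule swap_ivl[OF cont])
  also have "\<dots> = integral {0..U} (\<lambda>u. (1 - exp (-((t+u)*X)) * ((t+u) * sin X + cos X)) / (1 + (t+u)^2))"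
    by (rule integral_cong) (use inner_x in auto)
  finally show ?thesis .
qed


lemma cont_sinc_on: "continuous_on S sinc"
  by (intro continuous_at_imp_continuous_on ballI isCont_sinc)

lemma aux_sq:
  fixes s :: real
  assumes "0 \<le> s"
  shows "s + 1 \<le> 2 * (1 + s^2)"
proof (cases "s \<le> 1")
  case True
  then show ?thesis using zero_le_power2[of s] by (smt (verit))
next
  case False
  then have "s * 1 \<le> s * s" by (intro mult_left_mono) auto
  then have "s \<le> s^2" by (simp add: power2_eq_square)
  then show ?thesis using False by (smt (verit))
qed

lemma sinc_lap:
  fixes t :: real
  assumes t: "t > 0"
  shows "(\<lambda>x. exp (-(t*x)) * sinc x) integrable_on {0..}"
    and "integral {0..} (\<lambda>x. exp (-(t*x)) * sinc x) = arccot t"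
proof -
  let ?g = "\<lambda>x. exp (-(t*x)) * sinc x"
  have gc: "continuous_on S ?g" for S
    by (intro continuous_intros cont_sinc_on)
  have gb: "norm (?g x) \<le> 1 * exp (- t * x)" for x
    using abs_sinc_le[of x] by (simp add: abs_mult mult_le_cancel_left1)
  show gi: "?g integrable_on {0..}"
    by (rule lap_int[OF gc t gb])
  define S where "S = integral {0..} ?g"
  have lim: "((\<lambda>X. integral {0..X} ?g) \<longlongrightarrow> S) at_top"
    unfolding S_def by (rule lap_tendsto[OF gc t gb])
  have key: "\<bar>integral {0..X} ?g - (arctan (t+U) - arctan t)\<bar> \<le> 1/U + 2*U*exp (-(t*X))"
    if U: "U > 0" and X: "X \<ge> 0" for U X
  proof -
    let ?phi = "\<lambda>u. (1 - exp (-((t+u)*X)) * ((t+u) * sin X + cos X)) / (1 + (t+u)^2)"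
    let ?psi = "\<lambda>u. exp (-((t+u)*X)) * ((t+u) * sin X + cos X) / (1 + (t+u)^2)"
    let ?rho = "\<lambda>u. 1 / (1 + (t+u)^2)"
    have sw: "integral {0..X} (\<lambda>x. exp (-(t*x)) * sinc x * (1 - exp (-(U*x)))) = integral {0..U} ?phi"
      by (rule sinc_swap) (use t U X in auto)
    have c1: "continuous_on {0..X} (\<lambda>x. exp (-(t*x)) * sinc x * exp (-(U*x)))"
      by (intro continuous_intros cont_sinc_on)
    have i1: "(\<lambda>x. exp (-(t*x)) * sinc x * exp (-(U*x))) integrable_on {0..X}"
      by (rule integrable_continuous_interval[OF c1])
    have i0: "?g integrable_on {0..X}"
      by (rule integrable_continuous_interval[OF gc])
    have "integral {0..X} (\<lambda>x. exp (-(t*x)) * sinc x * (1 - exp (-(U*x))))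
          = integral {0..X} (\<lambda>x. ?g x - exp (-(t*x)) * sinc x * exp (-(U*x)))"
      by (simp add: algebra_simps)
    also have "\<dots> = integral {0..X} ?g - integral {0..X} (\<lambda>x. exp (-(t*x)) * sinc x * exp (-(U*x)))"
      by (rule integral_diff[OF i0 i1])
    finally have e1: "integral {0..X} (\<lambda>x. exp (-(t*x)) * sinc x * (1 - exp (-(U*x)))) =
         integral {0..X} ?g - integral {0..X} (\<lambda>x. exp (-(t*x)) * sinc x * exp (-(U*x)))" .
    have pos: "1 + (t+u)^2 \<noteq> 0" for u :: real
      by (metis add_pos_nonneg zero_le_power2 zero_less_one order_less_irrefl)
    have crho: "continuous_on {0..U} ?rho"
      by (intro continuous_intros) (use pos in auto)
    have cpsi: "continuous_on {0..U} ?psi"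
      by (intro continuous_intros) (use pos in auto)
    have "integral {0..U} ?phi = integral {0..U} (\<lambda>u. ?rho u - ?psi u)"
      by (rule integral_cong) (simp add: diff_divide_distrib)
    also have "\<dots> = integral {0..U} ?rho - integral {0..U} ?psi"
      by (rule integral_diff[OF integrable_continuous_interval[OF crho] integrable_continuous_interval[OF cpsi]])
    finally have e2: "integral {0..U} ?phi = integral {0..U} ?rho - integral {0..U} ?psi" .
    have e3: "integral {0..U} ?rho = arctan (t+U) - arctan t"
    proof -
      have "integral {0..U} ?rho = arctan (t+U) - arctan (t+0)"
        by (rule ftc_integral[where F="\<lambda>u. arctan (t+u)"])
           (use U in \<open>auto intro!: derivative_eq_intros simp: has_real_derivative_iff_has_vector_derivative[symmetric] power2_eq_square inverse_eq_divide\<close>)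
      then show ?thesis by simp
    qed
    have b1: "\<bar>integral {0..X} (\<lambda>x. exp (-(t*x)) * sinc x * exp (-(U*x)))\<bar> \<le> 1/U"
    proof -
      have "norm (integral {0..X} (\<lambda>x. exp (-(t*x)) * sinc x * exp (-(U*x)))) \<le> integral {0..X} (\<lambda>x. exp (-((t+U)*x)))"
      proof (rule integral_norm_bound_integral[OF i1])
        show "(\<lambda>x. exp (-((t+U)*x))) integrable_on {0..X}"
          by (intro integrable_continuous_interval continuous_intros)
        fix x assume "x \<in> {0..X}"
        have "\<bar>exp (-(t*x)) * sinc x * exp (-(U*x))\<bar> = exp (-(t*x)) * \<bar>sinc x\<bar> * exp (-(U*x))"
          by (simp add: abs_mult)
        also have "\<dots> \<le> exp (-(t*x)) * 1 * exp (-(U*x))"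
          by (intro mult_right_mono mult_left_mono abs_sinc_le) auto
        also have "\<dots> = exp (-((t+U)*x))" by (simp add: algebra_simps flip: exp_add)
        finally show "norm (exp (-(t*x)) * sinc x * exp (-(U*x))) \<le> exp (-((t+U)*x))" by simp
      qed
      also have "\<dots> \<le> 1 / (t+U)" by (rule int_exp_Icc_le) (use t U X in auto)
      also have "\<dots> \<le> 1 / U" using t U by (intro divide_left_mono) auto
      finally show ?thesis by simp
    qed
    have b2: "\<bar>integral {0..U} ?psi\<bar> \<le> 2*U*exp (-(t*X))"
    proof -
      have "norm (integral {0..U} ?psi) \<le> integral {0..U} (\<lambda>u. 2 * exp (-(t*X)))"
      proof (rule integral_norm_bound_integral[OF integrable_continuous_interval[OF cpsi]])
        show "(\<lambda>u. 2 * exp (-(t*X))) integrable_on {0..U}" by (intro integrable_continuous_interval continuous_intros)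
        fix u assume u: "u \<in> {0..U}"
        let ?s = "t + u"
        have s0: "?s > 0" using t u by auto
        have "\<bar>?s * sin X + cos X\<bar> \<le> \<bar>?s * sin X\<bar> + \<bar>cos X\<bar>"
          by (rule abs_triangle_ineq)
        also have "\<bar>?s * sin X\<bar> \<le> ?s"
          using s0 abs_sin_le_one[of X] by (simp add: abs_mult mult_left_le)
        also have "\<bar>cos X\<bar> \<le> 1" by simp
        also have "?s + 1 \<le> 2 * (1 + ?s^2)"
          by (rule aux_sq) (use s0 in auto)
        finally have A: "\<bar>?s * sin X + cos X\<bar> / (1 + ?s^2) \<le> 2"
          by (simp add: divide_le_eq add_pos_nonneg)
        have B: "exp (-(?s*X)) \<le> exp (-(t*X))"
          using u X by (simp add: mult_right_mono algebra_simps)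
        have "\<bar>?psi u\<bar> = exp (-(?s*X)) * (\<bar>?s * sin X + cos X\<bar> / (1 + ?s^2))"
          by (simp add: abs_mult abs_divide add_pos_nonneg)
        also have "\<dots> \<le> exp (-(t*X)) * 2"
          by (intro mult_mono A B) auto
        finally show "norm (?psi u) \<le> 2 * exp (-(t*X))" by simp
      qed
      also have "\<dots> = 2*U*exp (-(t*X))" using U by simp
      finally show ?thesis by simp
    qed
    have "integral {0..X} ?g - (arctan (t+U) - arctan t)
        = integral {0..X} (\<lambda>x. exp (-(t*x)) * sinc x * exp (-(U*x))) - integral {0..U} ?psi"
      using sw e1 e2 e3 by linarith
    then show ?thesis using b1 b2 by linarith
  qed
  have key2: "\<bar>S - (arctan (t+U) - arctan t)\<bar> \<le> 1/U" if U: "U > 0" for U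
  proof (rule tendsto_le[OF trivial_limit_at_top_linorder])
    show "((\<lambda>X. 1/U + 2*U*exp (-(t*X))) \<longlongrightarrow> 1/U) at_top"
      using t by real_asymp
    show "((\<lambda>X. \<bar>integral {0..X} ?g - (arctan (t+U) - arctan t)\<bar>) \<longlongrightarrow> \<bar>S - (arctan (t+U) - arctan t)\<bar>) at_top"
      by (intro tendsto_intros lim)
    show "\<forall>\<^sub>F X in at_top. \<bar>integral {0..X} ?g - (arctan (t+U) - arctan t)\<bar> \<le> 1/U + 2*U*exp (-(t*X))"
      using eventually_ge_at_top[of 0] by eventually_elim (rule key[OF U])
  qed
  have "\<bar>S - arccot t\<bar> \<le> 0"
  proof (rule tendsto_le[OF trivial_limit_at_top_linorder])
    show "((\<lambda>U. 1/U + (pi/2 - arctan (t+U))) \<longlongrightarrow> 0) at_top"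
    proof -
      have "((\<lambda>U. arctan (t+U)) \<longlongrightarrow> pi/2) at_top"
        by (rule filterlim_compose[OF tendsto_arctan_at_top]) real_asymp
      moreover have "((\<lambda>U::real. 1/U) \<longlongrightarrow> 0) at_top" by real_asymp
      ultimately have "((\<lambda>U. 1/U + (pi/2 - arctan (t+U))) \<longlongrightarrow> 0 + (pi/2 - pi/2)) at_top"
        by (intro tendsto_intros)
      then show ?thesis by simp
    qed
    show "((\<lambda>U. \<bar>S - arccot t\<bar>) \<longlongrightarrow> \<bar>S - arccot t\<bar>) at_top" by simp
    show "\<forall>\<^sub>F U in at_top. \<bar>S - arccot t\<bar> \<le> 1/U + (pi/2 - arctan (t+U))"
      using eventually_gt_at_top[of 0]
    proof eventually_elim
      case (elim U)
      have "\<bar>S - arccot t\<bar> \<le> \<bar>S - (arctan (t+U) - arctan t)\<bar> + \<bar>(arctan (t+U) - arctan t) - arccot t\<bar>"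
        by linarith
      also have "\<bar>(arctan (t+U) - arctan t) - arccot t\<bar> = pi/2 - arctan (t+U)"
        using arctan_ubound[of "t+U"] by (simp add: arccot_def)
      finally show ?case using key2[OF elim] by linarith
    qed
  qed
  then show "integral {0..} ?g = arccot t" unfolding S_def by simp
qed


definition LL :: "real \<Rightarrow> complex" where
  "LL t = integral {0..} (\<lambda>x. complex_of_real (exp (-(t*x))) / (complex_of_real x - \<i>))"

lemma cmod_x_minus_i: "cmod (complex_of_real x - \<i>) = sqrt (x^2 + 1)"
  by (simp add: cmod_def)

lemma cmod_x_minus_i_ge1: "cmod (complex_of_real x - \<i>) \<ge> 1"
  unfolding cmod_x_minus_i by simp

lemma x_minus_i_nz: "complex_of_real x - \<i> \<noteq> 0"
  using cmod_x_minus_i_ge1[of x] by auto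

lemma LL_integrand_norm:
  "norm (complex_of_real (exp (-(t*x))) / (complex_of_real x - \<i>)) = exp (-(t*x)) / sqrt (x^2 + 1)"
  by (simp add: norm_divide cmod_x_minus_i)

lemma LL_cont: "continuous_on S (\<lambda>x. complex_of_real (exp (-(t*x))) / (complex_of_real x - \<i>))"
  by (intro continuous_intros) (auto simp: complex_eq_iff)

lemma LL_bound: "norm (complex_of_real (exp (-(t*x))) / (complex_of_real x - \<i>)) \<le> 1 * exp (- t * x)"
proof -
  have "exp (-(t*x)) / sqrt (x^2 + 1) \<le> exp (-(t*x)) / 1"
    by (intro divide_left_mono) (auto intro: add_nonneg_pos)
  then show ?thesis unfolding LL_integrand_norm by simp
qed

lemma LL_tendsto:
  assumes t: "t > 0"
  shows "((\<lambda>X. integral {0..X} (\<lambda>x. complex_of_real (exp (-(t*x))) / (complex_of_real x - \<i>))) \<longlongrightarrow> LL t) at_top"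
  unfolding LL_def by (rule lap_tendsto[OF LL_cont t LL_bound])

lemma E_swap:
  fixes t R X :: real
  assumes t: "t > 0" and R: "R \<ge> 0" and X: "X \<ge> 0"
  shows "integral {0..R} (\<lambda>u. exp (\<i> * complex_of_real u) * complex_of_real ((1 - exp (-((u+t)*X))) / (u+t)))
       = integral {0..X} (\<lambda>x. (exp (complex_of_real R * (\<i> - complex_of_real x)) - 1) / (\<i> - complex_of_real x) * complex_of_real (exp (-(t*x))))"
proof -
  let ?f = "\<lambda>u x. exp (complex_of_real u * (\<i> - complex_of_real x)) * complex_of_real (exp (-(t*x)))"
  have cont: "continuous_on ({0..R} \<times> {0..X}) (\<lambda>(u,x). ?f u x)"
    unfolding case_prod_unfold by (intro continuous_intros)
  have fx: "?f u x = exp (\<i> * complex_of_real u) * complex_of_real (exp (-((u+t)*x)))" for u x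
  proof -
    have arg: "complex_of_real u * (\<i> - complex_of_real x) + complex_of_real (-(t*x)) = \<i> * complex_of_real u + complex_of_real (-((u+t)*x))"
      by (simp add: field_simps)
    have "?f u x = exp (complex_of_real u * (\<i> - complex_of_real x)) * exp (complex_of_real (-(t*x)))"
      by (simp only: exp_of_real)
    also have "\<dots> = exp (complex_of_real u * (\<i> - complex_of_real x) + complex_of_real (-(t*x)))"
      by (simp only: exp_add)
    also have "\<dots> = exp (\<i> * complex_of_real u + complex_of_real (-((u+t)*x)))"
      by (simp only: arg)
    also have "\<dots> = exp (\<i> * complex_of_real u) * complex_of_real (exp (-((u+t)*x)))"
      by (simp only: exp_add exp_of_real)
    finally show ?thesis .
  qed
  have inner_x: "integral {0..X} (?f u) = exp (\<i> * complex_of_real u) * complex_of_real ((1 - exp (-((u+t)*X))) / (u+t))"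
    if u: "u \<in> {0..R}" for u
  proof -
    have ut: "u + t > 0" using u t by auto
    have gi: "((\<lambda>x. exp (-((u+t)*x))) has_integral (1 - exp (-((u+t)*X))) / (u+t)) {0..X}"
    proof -
      have "(\<lambda>x. exp (-((u+t)*x))) integrable_on {0..X}"
        by (intro integrable_continuous_interval continuous_intros)
      from integrable_integral[OF this] show ?thesis using int_exp_Icc[OF ut X] by simp
    qed
    have "integral {0..X} (?f u) = integral {0..X} (\<lambda>x. exp (\<i> * complex_of_real u) * complex_of_real (exp (-((u+t)*x))))"
      by (simp add: fx)
    also have "\<dots> = exp (\<i> * complex_of_real u) * integral {0..X} (\<lambda>x. complex_of_real (exp (-((u+t)*x))))"
      by simp
    also have "integral {0..X} (\<lambda>x. complex_of_real (exp (-((u+t)*x)))) = complex_of_real ((1 - exp (-((u+t)*X))) / (u+t))"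
      using has_integral_of_real[OF gi] by (rule integral_unique)
    finally show ?thesis .
  qed
  have inner_u: "integral {0..R} (\<lambda>u. ?f u x) = (exp (complex_of_real R * (\<i> - complex_of_real x)) - 1) / (\<i> - complex_of_real x) * complex_of_real (exp (-(t*x)))"
    if x: "x \<in> {0..X}" for x
  proof -
    define w where "w = \<i> - complex_of_real x"
    define c where "c = complex_of_real (exp (-(t*x)))"
    have wnz: "w \<noteq> 0" unfolding w_def using x_minus_i_nz[of x] by (metis minus_diff_eq neg_equal_0_iff_equal)
    have "integral {0..R} (\<lambda>u. exp (complex_of_real u * w) * c) = exp (complex_of_real R * w) / w * c - exp (complex_of_real 0 * w) / w * c"
    proof (rule ftc_integral[OF R])
      fix u assume "u \<in> {0..R}"
      have "((\<lambda>z. exp (z * w) / w * c) has_field_derivative exp (complex_of_real u * w) * c) (at (complex_of_real u))"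
        by (auto intro!: derivative_eq_intros simp: wnz)
      then show "((\<lambda>u. exp (complex_of_real u * w) / w * c) has_vector_derivative exp (complex_of_real u * w) * c) (at u within {0..R})"
        by (rule has_vector_derivative_real_field)
    qed
    moreover have "exp (complex_of_real R * w) / w * c - exp (complex_of_real 0 * w) / w * c = (exp (complex_of_real R * w) - 1) / w * c"
      by (simp add: diff_divide_distrib left_diff_distrib)
    moreover have "(\<lambda>u. exp (complex_of_real u * w) * c) = (\<lambda>u. ?f u x)"
      unfolding w_def c_def by simp
    ultimately show ?thesis unfolding w_def c_def by simp
  qed
  have "integral {0..R} (\<lambda>u. exp (\<i> * complex_of_real u) * complex_of_real ((1 - exp (-((u+t)*X))) / (u+t)))
      = integral {0..R} (\<lambda>u. integral {0..X} (?f u))"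
    by (rule integral_cong) (use inner_x in auto)
  also have "\<dots> = integral {0..X} (\<lambda>x. integral {0..R} (\<lambda>u. ?f u x))"
    by (rule swap_ivl[OF cont])
  also have "\<dots> = integral {0..X} (\<lambda>x. (exp (complex_of_real R * (\<i> - complex_of_real x)) - 1) / (\<i> - complex_of_real x) * complex_of_real (exp (-(t*x))))"
    by (rule integral_cong) (use inner_u in auto)
  finally show ?thesis .
qed

lemma aux_div:
  fixes z :: complex and D e :: real
  assumes "D \<noteq> 0"
  shows "z * complex_of_real ((1 - e) / D) = z / complex_of_real D - z * complex_of_real (e / D)"
  using assms by (simp add: field_simps)

lemma aux_div2:
  fixes E c v :: complex
  assumes "v \<noteq> 0"
  shows "(E - 1) / (- v) * c = c / v + E / (- v) * c"
  using assms by (simp add: field_simps)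

definition IE :: "real \<Rightarrow> real \<Rightarrow> complex" where
  "IE t R = integral {0..R} (\<lambda>u. exp (\<i> * complex_of_real u) / complex_of_real (u + t))"

lemma IE_bound:
  fixes t R X :: real
  assumes t: "t > 0" and R: "R \<ge> 0" and X: "X \<ge> 0"
  shows "norm (IE t R - integral {0..X} (\<lambda>x. complex_of_real (exp (-(t*x))) / (complex_of_real x - \<i>)))
         \<le> R * (exp (-(t*X)) / t) + 1 / (R + t)"
proof -
  let ?a = "\<lambda>u. exp (\<i> * complex_of_real u) / complex_of_real (u + t)"
  let ?b = "\<lambda>u. exp (\<i> * complex_of_real u) * complex_of_real (exp (-((u+t)*X)) / (u+t))"
  let ?J = "\<lambda>x. complex_of_real (exp (-(t*x))) / (complex_of_real x - \<i>)"
  let ?K = "\<lambda>x. exp (complex_of_real R * (\<i> - complex_of_real x)) / (\<i> - complex_of_real x) * complex_of_real (exp (-(t*x)))"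
  have nz1: "complex_of_real (u + t) \<noteq> 0" if "u \<in> {0..R}" for u using that t by (auto simp: complex_eq_iff)
  have nz2: "\<i> - complex_of_real x \<noteq> 0" for x by (metis minus_diff_eq neg_equal_0_iff_equal x_minus_i_nz)
  have ca: "continuous_on {0..R} ?a" by (intro continuous_intros) (use nz1 in auto)
  have cb: "continuous_on {0..R} ?b" by (intro continuous_intros) (use t in auto)
  have cJ: "continuous_on {0..X} ?J" by (rule LL_cont)
  have cK: "continuous_on {0..X} ?K" by (intro continuous_intros) (use nz2 in auto)
  have "integral {0..R} (\<lambda>u. exp (\<i> * complex_of_real u) * complex_of_real ((1 - exp (-((u+t)*X))) / (u+t)))
      = integral {0..R} (\<lambda>u. ?a u - ?b u)"
  proof (rule integral_cong)
    fix u assume u: "u \<in> {0..R}"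
    then have "u + t \<noteq> 0" using t by auto
    then show "exp (\<i> * complex_of_real u) * complex_of_real ((1 - exp (-((u+t)*X))) / (u+t)) = ?a u - ?b u"
      by (rule aux_div)
  qed
  also have "\<dots> = IE t R - integral {0..R} ?b"
    unfolding IE_def by (rule integral_diff[OF integrable_continuous_interval[OF ca] integrable_continuous_interval[OF cb]])
  finally have l: "integral {0..R} (\<lambda>u. exp (\<i> * complex_of_real u) * complex_of_real ((1 - exp (-((u+t)*X))) / (u+t)))
      = IE t R - integral {0..R} ?b" .
  have "integral {0..X} (\<lambda>x. (exp (complex_of_real R * (\<i> - complex_of_real x)) - 1) / (\<i> - complex_of_real x) * complex_of_real (exp (-(t*x))))
      = integral {0..X} (\<lambda>x. ?J x + ?K x)"
  proof (rule integral_cong)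
    fix x
    show "(exp (complex_of_real R * (\<i> - complex_of_real x)) - 1) / (\<i> - complex_of_real x) * complex_of_real (exp (-(t*x))) = ?J x + ?K x"
      using aux_div2[OF x_minus_i_nz[of x], of "exp (complex_of_real R * (\<i> - complex_of_real x))" "complex_of_real (exp (-(t*x)))"]
      by (simp only: minus_diff_eq)
  qed
  also have "\<dots> = integral {0..X} ?J + integral {0..X} ?K"
    by (rule integral_add[OF integrable_continuous_interval[OF cJ] integrable_continuous_interval[OF cK]])
  finally have r: "integral {0..X} (\<lambda>x. (exp (complex_of_real R * (\<i> - complex_of_real x)) - 1) / (\<i> - complex_of_real x) * complex_of_real (exp (-(t*x))))
      = integral {0..X} ?J + integral {0..X} ?K" .
  have eq: "IE t R - integral {0..X} ?J = integral {0..R} ?b + integral {0..X} ?K"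
    using E_swap[OF t R X] l r by (simp add: algebra_simps)
  have nb: "norm (integral {0..R} ?b) \<le> R * (exp (-(t*X)) / t)"
  proof -
    have "norm (integral {0..R} ?b) \<le> integral {0..R} (\<lambda>u. exp (-(t*X)) / t)"
    proof (rule integral_norm_bound_integral[OF integrable_continuous_interval[OF cb]])
      show "(\<lambda>u. exp (-(t*X)) / t) integrable_on {0..R}" by (intro integrable_continuous_interval continuous_intros)
      fix u assume u: "u \<in> {0..R}"
      have "norm (?b u) = exp (-((u+t)*X)) / (u+t)"
        using u t by (simp add: norm_mult del: of_real_divide)
      also have "\<dots> \<le> exp (-(t*X)) / t"
      proof (rule frac_le)
        show "exp (-((u+t)*X)) \<le> exp (-(t*X))" using u X by (simp add: mult_right_mono algebra_simps)
      qed (use u t in auto)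
      finally show "norm (?b u) \<le> exp (-(t*X)) / t" .
    qed
    also have "\<dots> = R * (exp (-(t*X)) / t)" using R by simp
    finally show ?thesis .
  qed
  have nK: "norm (integral {0..X} ?K) \<le> 1 / (R + t)"
  proof -
    have "norm (integral {0..X} ?K) \<le> integral {0..X} (\<lambda>x. exp (-((R+t)*x)))"
    proof (rule integral_norm_bound_integral[OF integrable_continuous_interval[OF cK]])
      show "(\<lambda>x. exp (-((R+t)*x))) integrable_on {0..X}" by (intro integrable_continuous_interval continuous_intros)
      fix x assume x: "x \<in> {0..X}"
      have n1: "norm (\<i> - complex_of_real x) \<ge> 1"
        using cmod_x_minus_i_ge1[of x] by (simp add: norm_minus_commute)
      have "norm (?K x) = exp (-(R*x)) / norm (\<i> - complex_of_real x) * exp (-(t*x))"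
        by (simp add: norm_mult norm_divide)
      also have "\<dots> \<le> exp (-(R*x)) / 1 * exp (-(t*x))"
        by (intro mult_right_mono divide_left_mono n1) (auto simp: complex_eq_iff)
      also have "\<dots> = exp (-((R+t)*x))" by (simp add: algebra_simps flip: exp_add)
      finally show "norm (?K x) \<le> exp (-((R+t)*x))" .
    qed
    also have "\<dots> \<le> 1 / (R + t)" by (rule int_exp_Icc_le) (use t R X in auto)
    finally show ?thesis .
  qed
  show ?thesis unfolding eq using norm_triangle_ineq[of "integral {0..R} ?b" "integral {0..X} ?K"] nb nK
    by linarith
qed

lemma IE_LL:
  fixes t R :: real
  assumes t: "t > 0" and R: "R \<ge> 0"
  shows "norm (IE t R - LL t) \<le> 1 / (R + t)"
proof (rule tendsto_le[OF trivial_limit_at_top_linorder])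
  show "((\<lambda>X. R * (exp (-(t*X)) / t) + 1 / (R + t)) \<longlongrightarrow> 1 / (R + t)) at_top"
    using t by real_asymp
  show "((\<lambda>X. norm (IE t R - integral {0..X} (\<lambda>x. complex_of_real (exp (-(t*x))) / (complex_of_real x - \<i>)))) \<longlongrightarrow> norm (IE t R - LL t)) at_top"
    by (intro tendsto_intros LL_tendsto t)
  show "\<forall>\<^sub>F X in at_top. norm (IE t R - integral {0..X} (\<lambda>x. complex_of_real (exp (-(t*x))) / (complex_of_real x - \<i>))) \<le> R * (exp (-(t*X)) / t) + 1 / (R + t)"
    using eventually_ge_at_top[of 0] by eventually_elim (rule IE_bound[OF t R])
qed

lemma IE_tendsto:
  fixes t :: real
  assumes t: "t > 0"
  shows "((\<lambda>R. IE t R) \<longlongrightarrow> LL t) at_top"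
proof -
  have "((\<lambda>R. IE t R - LL t) \<longlongrightarrow> 0) at_top"
  proof (rule Lim_null_comparison)
    show "\<forall>\<^sub>F R in at_top. norm (IE t R - LL t) \<le> 1 / (R + t)"
      using eventually_ge_at_top[of 0] by eventually_elim (rule IE_LL[OF t])
    show "((\<lambda>R. 1 / (R + t)) \<longlongrightarrow> 0) at_top" by real_asymp
  qed
  then show ?thesis by (simp add: LIM_zero_iff)
qed

lemma E_eq_LL:
  fixes t :: real
  assumes t: "t > 0"
  shows "E t = LL t"
proof -
  have "E t = Lim at_top (\<lambda>R. IE t R)" unfolding E_def IE_def by simp
  also have "\<dots> = LL t" by (rule tendsto_Lim[OF trivial_limit_at_top_linorder IE_tendsto[OF t]])
  finally show ?thesis .
qed

lemma Im_IE:
  fixes t R :: real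
  assumes t: "t > 0" and R: "R \<ge> 0"
  shows "Im (exp (\<i> * complex_of_real t) * IE t R) = Si (R + t) - Si t"
proof -
  let ?a = "\<lambda>u. exp (\<i> * complex_of_real u) / complex_of_real (u + t)"
  have ca: "continuous_on {0..R} ?a" by (intro continuous_intros) (use t in \<open>auto simp: complex_eq_iff\<close>)
  have prev: "exp (\<i> * complex_of_real t) * IE t R = integral {0..R} (\<lambda>u. exp (\<i> * complex_of_real t) * ?a u)"
    unfolding IE_def by (rule integral_mult_right[symmetric])
  have ci: "(\<lambda>u. exp (\<i> * complex_of_real t) * ?a u) integrable_on {0..R}"
    by (rule integrable_continuous_interval) (intro continuous_intros ca)
  have "Im (exp (\<i> * complex_of_real t) * IE t R) = Im (integral {0..R} (\<lambda>u. exp (\<i> * complex_of_real t) * ?a u))"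
    by (subst prev) (rule refl)
  also have "\<dots> = integral {0..R} (Im \<circ> (\<lambda>u. exp (\<i> * complex_of_real t) * ?a u))"
    by (rule integral_linear[OF ci bounded_linear_Im, symmetric])
  also have "\<dots> = integral {0..R} (\<lambda>u. sin (u + t) / (u + t))"
  proof (rule integral_cong)
    fix u assume u: "u \<in> {0..R}"
    have "exp (\<i> * complex_of_real t) * ?a u = exp (\<i> * complex_of_real (u + t)) / complex_of_real (u + t)"
      by (simp add: exp_add[symmetric] algebra_simps)
    also have "\<dots> = cis (u + t) / complex_of_real (u + t)" by (simp add: cis_conv_exp)
    finally have eq: "exp (\<i> * complex_of_real t) * ?a u = cis (u + t) / complex_of_real (u + t)" .
    show "(Im \<circ> (\<lambda>u. exp (\<i> * complex_of_real t) * ?a u)) u = sin (u + t) / (u + t)"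
      by (simp only: comp_apply eq Im_divide_of_real cis.sel)
  qed
  also have "\<dots> = Si (R + t) - Si (0 + t)"
  proof (rule ftc_integral[OF R])
    fix u assume u: "u \<in> {0..R}"
    have "((\<lambda>u. Si (u + t)) has_real_derivative sinc (u + t) * 1) (at u within {0..R})"
      by (rule DERIV_chain2[OF DERIV_Si]) (auto intro!: derivative_eq_intros)
    moreover have "sinc (u + t) * 1 = sin (u + t) / (u + t)" using u t by auto
    ultimately show "((\<lambda>u. Si (u + t)) has_vector_derivative sin (u + t) / (u + t)) (at u within {0..R})"
      by (simp add: has_real_derivative_iff_has_vector_derivative)
  qed
  finally show ?thesis by simp
qed


definition mf :: "real \<Rightarrow> real \<Rightarrow> real" where
  "mf t u = exp (- t * u) / sqrt (u\<^sup>2 + 1)"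

lemma M_mf: "M t = integral {0..} (mf t)"
  unfolding M_def mf_def ..

lemma sqrt_pos1: "sqrt (u^2 + 1) > 0"
  by (simp add: add_nonneg_pos)

lemma mf_cont: "continuous_on S (mf t)"
  unfolding mf_def by (intro continuous_intros) (use sqrt_pos1 in \<open>auto simp: less_imp_neq[symmetric]\<close>)

lemma mf_pos: "mf t u > 0"
  unfolding mf_def using sqrt_pos1[of u] by simp

lemma mf_bound: "norm (mf t u) \<le> 1 * exp (- t * u)"
proof -
  have "exp (- t * u) / sqrt (u^2 + 1) \<le> exp (- t * u) / 1"
    by (intro divide_left_mono) (auto intro: add_nonneg_pos)
  then show ?thesis using mf_pos[of t u] unfolding mf_def by simp
qed

lemma mf_int: "t > 0 \<Longrightarrow> mf t integrable_on {0..}"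
  by (rule lap_int[OF mf_cont _ mf_bound])

lemma mf_mono: "0 \<le> u \<Longrightarrow> s \<le> t \<Longrightarrow> mf t u \<le> mf s u"
  unfolding mf_def by (intro divide_right_mono) (auto simp: mult_right_mono)

lemma M_mono: "0 < s \<Longrightarrow> s \<le> t \<Longrightarrow> M t \<le> M s"
  unfolding M_mf by (rule integral_le[OF mf_int mf_int]) (auto intro: mf_mono)

lemma pos_integral:
  fixes k :: "real \<Rightarrow> real"
  assumes kc: "continuous_on {0..} k" and ki: "k integrable_on {0..}"
    and k0: "\<And>x. x \<ge> 0 \<Longrightarrow> k x \<ge> 0" and x0: "x0 > 0" and kx0: "k x0 > 0"
  shows "integral {0..} k > 0"
proof -
  obtain d where d: "d > 0" "\<And>y. y \<in> {0..} \<Longrightarrow> dist y x0 < d \<Longrightarrow> dist (k y) (k x0) < k x0 / 2"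
    using kc x0 kx0 unfolding continuous_on_iff by (metis atLeast_iff half_gt_zero less_imp_le)
  define e where "e = min (d/2) (x0/2)"
  have e: "e > 0" "e < d" "e \<le> x0/2" using d x0 by (auto simp: e_def)
  have sub: "{x0 - e..x0 + e} \<subseteq> {0..}" using e by auto
  have lo: "k x0 / 2 \<le> k y" if "y \<in> {x0 - e..x0 + e}" for y
  proof -
    have "dist y x0 < d" using that e by (auto simp: dist_real_def)
    then have "dist (k y) (k x0) < k x0 / 2" using d(2)[of y] sub that by auto
    then have "\<bar>k y - k x0\<bar> < k x0 / 2" by (simp add: dist_real_def)
    then show ?thesis unfolding abs_less_iff by linarith
  qed
  have ci: "k integrable_on {x0 - e..x0 + e}"
    by (rule integrable_continuous_interval) (use kc sub in \<open>blast intro: continuous_on_subset\<close>)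
  have "integral {x0 - e..x0 + e} (\<lambda>y. k x0 / 2) \<le> integral {x0 - e..x0 + e} k"
    by (rule integral_le[OF _ ci lo]) (intro integrable_continuous_interval continuous_intros)
  moreover have "integral {x0 - e..x0 + e} (\<lambda>y. k x0 / 2) = 2 * e * (k x0 / 2)"
    using e by simp
  moreover have "integral {x0 - e..x0 + e} k \<le> integral {0..} k"
    by (rule integral_subset_le[OF sub ci ki]) (use k0 in auto)
  moreover have "2 * e * (k x0 / 2) > 0" using e kx0 by simp
  ultimately show ?thesis by linarith
qed

lemma M_pos: "t > 0 \<Longrightarrow> M t > 0"
  unfolding M_mf by (rule pos_integral[OF mf_cont mf_int _ zero_less_one]) (auto intro: less_imp_le mf_pos)

lemma Re_eq_cmod_Im: "Re z = cmod z \<Longrightarrow> Im z = 0"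
proof -
  assume h: "Re z = cmod z"
  have "(cmod z)^2 = (Re z)^2 + (Im z)^2" by (simp add: cmod_power2)
  then show "Im z = 0" using h by simp
qed

lemma Im_c_g:
  fixes c :: complex and t x :: real
  shows "Im (c * (complex_of_real (exp (-(t*x))) / (complex_of_real x - \<i>))) = exp (-(t*x)) / (x^2 + 1) * (x * Im c + Re c)"
proof -
  have "complex_of_real (exp (-(t*x))) / (complex_of_real x - \<i>) = complex_of_real (exp (-(t*x)) / (x^2 + 1)) * (complex_of_real x + \<i>)"
  proof -
    have nz: "complex_of_real x - \<i> \<noteq> 0" by (rule x_minus_i_nz)
    have p: "(complex_of_real x + \<i>) * (complex_of_real x - \<i>) = complex_of_real (x^2 + 1)"
      by (simp add: algebra_simps power2_eq_square)
    have n2: "x^2 + 1 \<noteq> 0" by (metis add_nonneg_pos zero_le_power2 zero_less_one less_irrefl)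
    have q0: "exp (-(t*x)) / (x^2 + 1) * (x^2 + 1) = exp (-(t*x))" using n2 by simp
    have q: "complex_of_real (exp (-(t*x)) / (x^2 + 1)) * complex_of_real (x^2 + 1) = complex_of_real (exp (-(t*x)))"
      by (metis of_real_mult q0)
    have "complex_of_real (exp (-(t*x))) = complex_of_real (exp (-(t*x)) / (x^2 + 1)) * (complex_of_real x + \<i>) * (complex_of_real x - \<i>)"
      by (simp only: mult.assoc p q)
    then show ?thesis using nz by (simp add: nonzero_divide_eq_eq)
  qed
  then show ?thesis by (simp add: algebra_simps)
qed

lemma LL_lt_M:
  fixes t :: real
  assumes t: "t > 0"
  shows "cmod (LL t) < M t"
proof (cases "LL t = 0")
  case True
  then show ?thesis using M_pos[OF t] by simp
next
  case False
  let ?g = "\<lambda>x. complex_of_real (exp (-(t*x))) / (complex_of_real x - \<i>)"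
  define c where "c = cnj (LL t) / complex_of_real (cmod (LL t))"
  have nc: "cmod c = 1" using False by (simp add: c_def norm_divide)
  have cL: "c * LL t = complex_of_real (cmod (LL t))"
  proof -
    have m: "LL t * cnj (LL t) = complex_of_real ((cmod (LL t))^2)"
      by (simp add: complex_mult_cnj cmod_power2)
    have "c * LL t = (LL t * cnj (LL t)) / complex_of_real (cmod (LL t))"
      by (simp add: c_def)
    also have "\<dots> = complex_of_real ((cmod (LL t))^2 / cmod (LL t))"
      by (simp only: m of_real_divide)
    also have "(cmod (LL t))^2 / cmod (LL t) = cmod (LL t)"
      using False by (simp add: power2_eq_square)
    finally show ?thesis .
  qed
  have gi: "?g integrable_on {0..}" by (rule lap_int[OF LL_cont t LL_bound])
  have cgi: "(\<lambda>x. c * ?g x) integrable_on {0..}" using gi by (rule integrable_on_mult_right)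
  have rgi: "(Re \<circ> (\<lambda>x. c * ?g x)) integrable_on {0..}" by (rule integrable_linear[OF cgi bounded_linear_Re])
  have "cmod (LL t) = Re (c * LL t)" by (simp add: cL)
  also have "c * LL t = integral {0..} (\<lambda>x. c * ?g x)" unfolding LL_def by (rule integral_mult_right[symmetric])
  also have "Re \<dots> = integral {0..} (Re \<circ> (\<lambda>x. c * ?g x))"
    by (rule integral_linear[OF cgi bounded_linear_Re, symmetric])
  finally have cm: "cmod (LL t) = integral {0..} (Re \<circ> (\<lambda>x. c * ?g x))" .
  let ?k = "\<lambda>x. mf t x - (Re \<circ> (\<lambda>x. c * ?g x)) x"
  have nm: "norm (c * ?g x) = mf t x" for x
    unfolding mf_def norm_mult nc using LL_integrand_norm[of t x] by simp
  have kge: "?k x \<ge> 0" for x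
    using complex_Re_le_cmod[of "c * ?g x"] nm[of x] by simp
  have "M t - cmod (LL t) = integral {0..} ?k"
    unfolding M_mf cm by (rule integral_diff[OF mf_int[OF t] rgi, symmetric])
  moreover have "integral {0..} ?k > 0"
  proof -
    have kc: "continuous_on {0..} ?k"
      unfolding comp_def by (intro continuous_intros mf_cont) (auto simp: complex_eq_iff)
    have ki: "?k integrable_on {0..}" by (rule integrable_diff[OF mf_int[OF t] rgi])
    have "?k 1 > 0 \<or> ?k 2 > 0"
    proof (rule ccontr)
      assume "\<not> (?k 1 > 0 \<or> ?k 2 > 0)"
      then have z1: "?k 1 = 0" and z2: "?k 2 = 0" using kge[of 1] kge[of 2] by auto
      have "Im (c * ?g 1) = 0"
        by (rule Re_eq_cmod_Im) (use z1 nm[of 1] in simp)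
      then have a: "Im c + Re c = 0" using Im_c_g[of c t 1] by simp
      have "Im (c * ?g 2) = 0"
        by (rule Re_eq_cmod_Im) (use z2 nm[of 2] in simp)
      then have b: "2 * Im c + Re c = 0" using Im_c_g[of c t 2] by simp
      from a b have "c = 0" by (simp add: complex_eq_iff)
      then show False using nc by simp
    qed
    then show ?thesis
      using pos_integral[OF kc ki kge, of 1] pos_integral[OF kc ki kge, of 2] by auto
  qed
  ultimately show ?thesis by simp
qed


section \<open>Taylor-type bounds\<close>

lemma nonneg_from_deriv:
  fixes g g' :: "real \<Rightarrow> real"
  assumes d: "\<And>y. 0 \<le> y \<Longrightarrow> (g has_real_derivative g' y) (at y)"
    and p: "\<And>y. 0 \<le> y \<Longrightarrow> 0 \<le> g' y" and g0: "g 0 = 0" and x: "0 \<le> x"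
  shows "0 \<le> g x"
proof -
  have "g 0 \<le> g x"
    by (rule DERIV_nonneg_imp_nondecreasing[OF x]) (use d p in blast)
  then show ?thesis using g0 by simp
qed

lemma exp_ge1: "1 - (x::real) \<le> exp (- x)"
  using exp_ge_add_one_self[of "-x"] by simp

lemma sin_le_x:
  assumes x: "0 \<le> (x::real)"
  shows "sin x \<le> x"
proof -
  have "0 \<le> (\<lambda>x. x - sin x) x"
  proof (rule nonneg_from_deriv[where g="\<lambda>x. x - sin x" and g'="\<lambda>y. 1 - cos y"])
    show "((\<lambda>x. x - sin x) has_real_derivative (\<lambda>y. 1 - cos y) y) (at y)" for y :: real
      by (auto intro!: derivative_eq_intros simp: field_simps)
    show "0 \<le> (\<lambda>y. 1 - cos y) y" if "0 \<le> y" for y :: real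
      by simp
  qed (use x in auto)
  then show ?thesis by simp
qed

lemma cos_ge2:
  assumes x: "0 \<le> (x::real)"
  shows "1 - x^2/2 \<le> cos x"
proof -
  have "0 \<le> (\<lambda>x. cos x - 1 + x^2/2) x"
  proof (rule nonneg_from_deriv[where g="\<lambda>x. cos x - 1 + x^2/2" and g'="\<lambda>y. y - sin y"])
    show "((\<lambda>x. cos x - 1 + x^2/2) has_real_derivative (\<lambda>y. y - sin y) y) (at y)" for y :: real
      by (auto intro!: derivative_eq_intros simp: field_simps)
    show "0 \<le> (\<lambda>y. y - sin y) y" if "0 \<le> y" for y :: real
      using sin_le_x[of y] that by simp
  qed (use x in auto)
  then show ?thesis by simp
qed

lemma sin_ge3:
  assumes x: "0 \<le> (x::real)"
  shows "x - x^3/6 \<le> sin x"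
proof -
  have "0 \<le> (\<lambda>x. sin x - x + x^3/6) x"
  proof (rule nonneg_from_deriv[where g="\<lambda>x. sin x - x + x^3/6" and g'="\<lambda>y. cos y - 1 + y^2/2"])
    show "((\<lambda>x. sin x - x + x^3/6) has_real_derivative (\<lambda>y. cos y - 1 + y^2/2) y) (at y)" for y :: real
      by (auto intro!: derivative_eq_intros simp: field_simps)
    show "0 \<le> (\<lambda>y. cos y - 1 + y^2/2) y" if "0 \<le> y" for y :: real
      using cos_ge2[of y] that by simp
  qed (use x in auto)
  then show ?thesis by simp
qed

lemma cos_le4:
  assumes x: "0 \<le> (x::real)"
  shows "cos x \<le> 1 - x^2/2 + x^4/24"
proof -
  have "0 \<le> (\<lambda>x. 1 - x^2/2 + x^4/24 - cos x) x"
  proof (rule nonneg_from_deriv[where g="\<lambda>x. 1 - x^2/2 + x^4/24 - cos x" and g'="\<lambda>y. sin y - y + y^3/6"])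
    show "((\<lambda>x. 1 - x^2/2 + x^4/24 - cos x) has_real_derivative (\<lambda>y. sin y - y + y^3/6) y) (at y)" for y :: real
      by (auto intro!: derivative_eq_intros simp: field_simps)
    show "0 \<le> (\<lambda>y. sin y - y + y^3/6) y" if "0 \<le> y" for y :: real
      using sin_ge3[of y] that by simp
  qed (use x in auto)
  then show ?thesis by simp
qed

lemma sin_le5:
  assumes x: "0 \<le> (x::real)"
  shows "sin x \<le> x - x^3/6 + x^5/120"
proof -
  have "0 \<le> (\<lambda>x. x - x^3/6 + x^5/120 - sin x) x"
  proof (rule nonneg_from_deriv[where g="\<lambda>x. x - x^3/6 + x^5/120 - sin x" and g'="\<lambda>y. 1 - y^2/2 + y^4/24 - cos y"])
    show "((\<lambda>x. x - x^3/6 + x^5/120 - sin x) has_real_derivative (\<lambda>y. 1 - y^2/2 + y^4/24 - cos y) y) (at y)" for y :: real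
      by (auto intro!: derivative_eq_intros simp: field_simps)
    show "0 \<le> (\<lambda>y. 1 - y^2/2 + y^4/24 - cos y) y" if "0 \<le> y" for y :: real
      using cos_le4[of y] that by simp
  qed (use x in auto)
  then show ?thesis by simp
qed

lemma cos_ge6:
  assumes x: "0 \<le> (x::real)"
  shows "1 - x^2/2 + x^4/24 - x^6/720 \<le> cos x"
proof -
  have "0 \<le> (\<lambda>x. cos x - (1 - x^2/2 + x^4/24 - x^6/720)) x"
  proof (rule nonneg_from_deriv[where g="\<lambda>x. cos x - (1 - x^2/2 + x^4/24 - x^6/720)" and g'="\<lambda>y. y - y^3/6 + y^5/120 - sin y"])
    show "((\<lambda>x. cos x - (1 - x^2/2 + x^4/24 - x^6/720)) has_real_derivative (\<lambda>y. y - y^3/6 + y^5/120 - sin y) y) (at y)" for y :: real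
      by (auto intro!: derivative_eq_intros simp: field_simps)
    show "0 \<le> (\<lambda>y. y - y^3/6 + y^5/120 - sin y) y" if "0 \<le> y" for y :: real
      using sin_le5[of y] that by simp
  qed (use x in auto)
  then show ?thesis by simp
qed

lemma sin_ge7:
  assumes x: "0 \<le> (x::real)"
  shows "x - x^3/6 + x^5/120 - x^7/5040 \<le> sin x"
proof -
  have "0 \<le> (\<lambda>x. sin x - (x - x^3/6 + x^5/120 - x^7/5040)) x"
  proof (rule nonneg_from_deriv[where g="\<lambda>x. sin x - (x - x^3/6 + x^5/120 - x^7/5040)" and g'="\<lambda>y. cos y - (1 - y^2/2 + y^4/24 - y^6/720)"])
    show "((\<lambda>x. sin x - (x - x^3/6 + x^5/120 - x^7/5040)) has_real_derivative (\<lambda>y. cos y - (1 - y^2/2 + y^4/24 - y^6/720)) y) (at y)" for y :: real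
      by (auto intro!: derivative_eq_intros simp: field_simps)
    show "0 \<le> (\<lambda>y. cos y - (1 - y^2/2 + y^4/24 - y^6/720)) y" if "0 \<le> y" for y :: real
      using cos_ge6[of y] that by simp
  qed (use x in auto)
  then show ?thesis by simp
qed

lemma cos_le8:
  assumes x: "0 \<le> (x::real)"
  shows "cos x \<le> 1 - x^2/2 + x^4/24 - x^6/720 + x^8/40320"
proof -
  have "0 \<le> (\<lambda>x. 1 - x^2/2 + x^4/24 - x^6/720 + x^8/40320 - cos x) x"
  proof (rule nonneg_from_deriv[where g="\<lambda>x. 1 - x^2/2 + x^4/24 - x^6/720 + x^8/40320 - cos x" and g'="\<lambda>y. sin y - (y - y^3/6 + y^5/120 - y^7/5040)"])
    show "((\<lambda>x. 1 - x^2/2 + x^4/24 - x^6/720 + x^8/40320 - cos x) has_real_derivative (\<lambda>y. sin y - (y - y^3/6 + y^5/120 - y^7/5040)) y) (at y)" for y :: real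
      by (auto intro!: derivative_eq_intros simp: field_simps)
    show "0 \<le> (\<lambda>y. sin y - (y - y^3/6 + y^5/120 - y^7/5040)) y" if "0 \<le> y" for y :: real
      using sin_ge7[of y] that by simp
  qed (use x in auto)
  then show ?thesis by simp
qed

lemma sin_le9:
  assumes x: "0 \<le> (x::real)"
  shows "sin x \<le> x - x^3/6 + x^5/120 - x^7/5040 + x^9/362880"
proof -
  have "0 \<le> (\<lambda>x. x - x^3/6 + x^5/120 - x^7/5040 + x^9/362880 - sin x) x"
  proof (rule nonneg_from_deriv[where g="\<lambda>x. x - x^3/6 + x^5/120 - x^7/5040 + x^9/362880 - sin x" and g'="\<lambda>y. 1 - y^2/2 + y^4/24 - y^6/720 + y^8/40320 - cos y"])
    show "((\<lambda>x. x - x^3/6 + x^5/120 - x^7/5040 + x^9/362880 - sin x) has_real_derivative (\<lambda>y. 1 - y^2/2 + y^4/24 - y^6/720 + y^8/40320 - cos y) y) (at y)" for y :: real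
      by (auto intro!: derivative_eq_intros simp: field_simps)
    show "0 \<le> (\<lambda>y. 1 - y^2/2 + y^4/24 - y^6/720 + y^8/40320 - cos y) y" if "0 \<le> y" for y :: real
      using cos_le8[of y] that by simp
  qed (use x in auto)
  then show ?thesis by simp
qed

lemma exp_le2:
  assumes x: "0 \<le> (x::real)"
  shows "exp (- x) \<le> 1 - x + x^2/2"
proof -
  have "0 \<le> (\<lambda>x. 1 - x + x^2/2 - exp (- x)) x"
  proof (rule nonneg_from_deriv[where g="\<lambda>x. 1 - x + x^2/2 - exp (- x)" and g'="\<lambda>y. exp (- y) - (1 - y)"])
    show "((\<lambda>x. 1 - x + x^2/2 - exp (- x)) has_real_derivative (\<lambda>y. exp (- y) - (1 - y)) y) (at y)" for y :: real
      by (auto intro!: derivative_eq_intros simp: field_simps)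
    show "0 \<le> (\<lambda>y. exp (- y) - (1 - y)) y" if "0 \<le> y" for y :: real
      using exp_ge1[of y] by simp
  qed (use x in auto)
  then show ?thesis by simp
qed

lemma exp_ge3:
  assumes x: "0 \<le> (x::real)"
  shows "1 - x + x^2/2 - x^3/6 \<le> exp (- x)"
proof -
  have "0 \<le> (\<lambda>x. exp (- x) - (1 - x + x^2/2 - x^3/6)) x"
  proof (rule nonneg_from_deriv[where g="\<lambda>x. exp (- x) - (1 - x + x^2/2 - x^3/6)" and g'="\<lambda>y. 1 - y + y^2/2 - exp (- y)"])
    show "((\<lambda>x. exp (- x) - (1 - x + x^2/2 - x^3/6)) has_real_derivative (\<lambda>y. 1 - y + y^2/2 - exp (- y)) y) (at y)" for y :: real
      by (auto intro!: derivative_eq_intros simp: field_simps)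
    show "0 \<le> (\<lambda>y. 1 - y + y^2/2 - exp (- y)) y" if "0 \<le> y" for y :: real
      using exp_le2[of y] that by simp
  qed (use x in auto)
  then show ?thesis by simp
qed

lemma exp_le4:
  assumes x: "0 \<le> (x::real)"
  shows "exp (- x) \<le> 1 - x + x^2/2 - x^3/6 + x^4/24"
proof -
  have "0 \<le> (\<lambda>x. 1 - x + x^2/2 - x^3/6 + x^4/24 - exp (- x)) x"
  proof (rule nonneg_from_deriv[where g="\<lambda>x. 1 - x + x^2/2 - x^3/6 + x^4/24 - exp (- x)" and g'="\<lambda>y. exp (- y) - (1 - y + y^2/2 - y^3/6)"])
    show "((\<lambda>x. 1 - x + x^2/2 - x^3/6 + x^4/24 - exp (- x)) has_real_derivative (\<lambda>y. exp (- y) - (1 - y + y^2/2 - y^3/6)) y) (at y)" for y :: real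
      by (auto intro!: derivative_eq_intros simp: field_simps)
    show "0 \<le> (\<lambda>y. exp (- y) - (1 - y + y^2/2 - y^3/6)) y" if "0 \<le> y" for y :: real
      using exp_ge3[of y] that by simp
  qed (use x in auto)
  then show ?thesis by simp
qed

lemma exp_ge5:
  assumes x: "0 \<le> (x::real)"
  shows "1 - x + x^2/2 - x^3/6 + x^4/24 - x^5/120 \<le> exp (- x)"
proof -
  have "0 \<le> (\<lambda>x. exp (- x) - (1 - x + x^2/2 - x^3/6 + x^4/24 - x^5/120)) x"
  proof (rule nonneg_from_deriv[where g="\<lambda>x. exp (- x) - (1 - x + x^2/2 - x^3/6 + x^4/24 - x^5/120)" and g'="\<lambda>y. 1 - y + y^2/2 - y^3/6 + y^4/24 - exp (- y)"])
    show "((\<lambda>x. exp (- x) - (1 - x + x^2/2 - x^3/6 + x^4/24 - x^5/120)) has_real_derivative (\<lambda>y. 1 - y + y^2/2 - y^3/6 + y^4/24 - exp (- y)) y) (at y)" for y :: real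
      by (auto intro!: derivative_eq_intros simp: field_simps)
    show "0 \<le> (\<lambda>y. 1 - y + y^2/2 - y^3/6 + y^4/24 - exp (- y)) y" if "0 \<le> y" for y :: real
      using exp_le4[of y] that by simp
  qed (use x in auto)
  then show ?thesis by simp
qed

section \<open>Polynomial interval bounds\<close>

fun pv :: "real list \<Rightarrow> nat \<Rightarrow> real \<Rightarrow> real" where
  "pv [] k x = 0"
| "pv (c # cs) k x = c * x ^ k + pv cs (Suc k) x"

fun plo :: "real list \<Rightarrow> nat \<Rightarrow> real \<Rightarrow> real \<Rightarrow> real" where
  "plo [] k a b = 0"
| "plo (c # cs) k a b = (if 0 \<le> c then c * a ^ k else c * b ^ k) + plo cs (Suc k) a b"

fun phi :: "real list \<Rightarrow> nat \<Rightarrow> real \<Rightarrow> real \<Rightarrow> real" where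
  "phi [] k a b = 0"
| "phi (c # cs) k a b = (if 0 \<le> c then c * b ^ k else c * a ^ k) + phi cs (Suc k) a b"

lemma pv_bounds:
  assumes "0 \<le> a" "a \<le> x" "x \<le> b"
  shows "plo cs k a b \<le> pv cs k x \<and> pv cs k x \<le> phi cs k a b"
proof (induction cs arbitrary: k)
  case Nil then show ?case by simp
next
  case (Cons c cs)
  have ax: "a ^ k \<le> x ^ k" and xb: "x ^ k \<le> b ^ k"
    using assms by (auto intro: power_mono)
  have "(if 0 \<le> c then c * a ^ k else c * b ^ k) \<le> c * x ^ k"
    using ax xb by (auto intro: mult_left_mono mult_left_mono_neg)
  moreover have "c * x ^ k \<le> (if 0 \<le> c then c * b ^ k else c * a ^ k)"
    using ax xb by (auto intro: mult_left_mono mult_left_mono_neg)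
  ultimately show ?case using Cons[of "Suc k"] by auto
qed


definition ff :: "real \<Rightarrow> real" where "ff x = 1 / sqrt (x^2 + 1)"

lemma mf_ff: "mf t x = exp (- t * x) * ff x"
  unfolding mf_def ff_def by simp

lemma sq1_pos: "0 < x^2 + (1::real)"
  by (metis add_nonneg_pos zero_le_power2 zero_less_one)

lemma ff_pos: "ff x > 0"
  unfolding ff_def using sq1_pos[of x] by simp

lemma ff_cont: "continuous_on S ff"
  unfolding ff_def by (intro continuous_intros) (use sq1_pos in \<open>auto simp: less_imp_neq[symmetric]\<close>)

lemma aux_q8:
  fixes Q y :: real
  shows "(Q / 8)^2 * (y + 1) - 1 = (Q^2 * (y + 1) - 64) / 64"
  by (simp add: power_divide field_simps)

lemma ff_le_P4: "ff x \<le> 1 - x^2/2 + 3*x^4/8"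
proof -
  define y where "y = x^2"
  have y0: "0 \<le> y" unfolding y_def by simp
  have x4: "x^4 = y^2" unfolding y_def by (simp add: power_mult[symmetric])
  let ?P = "1 - y/2 + 3*y^2/8"
  have Pe: "?P = 3/8 * (y - 2/3)^2 + 5/6" by (simp add: power2_eq_square algebra_simps)
  have Ppos: "?P > 0" unfolding Pe by (simp add: add_nonneg_pos)
  have id0: "(8 - 4*y + 3*y^2)^2 * (y + 1) - 64 = y^3 * (9 * y^2 - 15 * y + 40)"
    by (simp add: power2_eq_square power3_eq_cube algebra_simps)
  have Peq: "?P = (8 - 4*y + 3*y^2) / 8" by (simp add: field_simps)
  have "?P^2 * (y + 1) - 1 = ((8 - 4*y + 3*y^2)^2 * (y + 1) - 64) / 64"
    by (subst Peq) (rule aux_q8)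
  also have "\<dots> = y^3 * (9 * (y - 5/6)^2 + 135/4) / 64"
    unfolding id0 by (simp add: power2_eq_square algebra_simps)
  finally have id: "?P^2 * (y + 1) - 1 = y^3 * (9 * (y - 5/6)^2 + 135/4) / 64" .
  have "y^3 * (9 * (y - 5/6)^2 + 135/4) / 64 \<ge> 0"
    using y0 by (intro divide_nonneg_pos mult_nonneg_nonneg add_nonneg_nonneg) auto
  then have ge1: "1 \<le> ?P^2 * (y + 1)" using id by linarith
  have "1 = sqrt 1" by simp
  also have "\<dots> \<le> sqrt (?P^2 * (y + 1))" using ge1 by (rule real_sqrt_le_mono)
  also have "\<dots> = ?P * sqrt (y + 1)" using Ppos by (simp add: real_sqrt_mult)
  finally have "1 \<le> ?P * sqrt (y + 1)" .
  moreover have "sqrt (y + 1) > 0" using y0 by simp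
  ultimately have "1 / sqrt (y + 1) \<le> ?P" by (simp add: divide_le_eq mult.commute)
  then show ?thesis unfolding ff_def y_def x4[unfolded y_def] by simp
qed

lemma ff_deriv: "(ff has_real_derivative (- x * ff x ^ 3)) (at x)"
proof -
  have s: "sqrt (x^2 + 1) > 0" using sq1_pos[of x] by simp
  have "((\<lambda>x. 1 / sqrt (x^2 + 1)) has_real_derivative (- x * (1 / sqrt (x^2 + 1)) ^ 3)) (at x)"
    using s by (auto intro!: derivative_eq_intros simp: field_simps power2_eq_square power3_eq_cube)
  then show ?thesis unfolding ff_def[abs_def] .
qed

lemma ff_sq: "ff x ^ 2 = 1 / (x^2 + 1)"
  unfolding ff_def using sq1_pos[of x] by (simp add: power_divide)

lemma ff_convex: "convex_on {3/4..} ff"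
proof (rule f''_ge0_imp_convex[where f' = "\<lambda>x. - x * ff x ^ 3" and f'' = "\<lambda>x. ff x ^ 3 * (3 * x^2 * ff x ^ 2 - 1)"])
  show "convex {3/4::real..}" by (rule convex_real_interval)
  show "DERIV ff x :> - x * ff x ^ 3" for x by (rule ff_deriv)
  show "DERIV (\<lambda>x. - x * ff x ^ 3) x :> ff x ^ 3 * (3 * x^2 * ff x ^ 2 - 1)" for x
    by (auto intro!: derivative_eq_intros ff_deriv simp: algebra_simps power2_eq_square power3_eq_cube)
  show "0 \<le> ff x ^ 3 * (3 * x^2 * ff x ^ 2 - 1)" if x: "x \<in> {3/4..}" for x
  proof -
    have "x^2 \<ge> (3/4)^2" using x by (intro power_mono) auto
    then have "x^2 \<ge> 9/16" by (simp add: power2_eq_square)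
    then have "2 * x^2 - 1 \<ge> 0" by simp
    then have "3 * x^2 / (x^2 + 1) - 1 \<ge> 0"
      using sq1_pos[of x] by (simp add: field_simps)
    then have "3 * x^2 * ff x ^ 2 - 1 \<ge> 0" by (simp add: ff_sq)
    then show ?thesis using ff_pos[of x] by simp
  qed
qed

lemma ff_chord:
  assumes ab: "3/4 \<le> a" "a < b" and x: "a \<le> x" "x \<le> b"
    and ra: "ff a \<le> ra" and rb: "ff b \<le> rb"
  shows "ff x \<le> ra + (rb - ra) / (b - a) * (x - a)"
proof -
  define u where "u = (x - a) / (b - a)"
  have u: "0 \<le> u" "u \<le> 1" using ab x by (auto simp: u_def divide_simps)
  have ba: "b - a \<noteq> 0" using ab by simp
  have "u * (b - a) = x - a" unfolding u_def using ba by simp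
  then have xe: "x = (1 - u) *\<^sub>R a + u *\<^sub>R b" by (simp add: algebra_simps)
  have "ff x \<le> (1 - u) * ff a + u * ff b"
    unfolding xe by (rule convex_onD[OF ff_convex u]) (use ab in auto)
  also have "\<dots> \<le> (1 - u) * ra + u * rb"
    using u ra rb by (intro add_mono mult_left_mono) auto
  also have "\<dots> = ra + u * (rb - ra)" by (simp add: algebra_simps)
  also have "u * (rb - ra) = (rb - ra) / (b - a) * (x - a)" by (simp add: u_def mult.commute)
  finally show ?thesis .
qed

lemma chord_int:
  fixes t a b ra s :: real
  assumes t: "t > 0" and ab: "a \<le> b"
  shows "integral {a..b} (\<lambda>x. exp (- t * x) * (ra + s * (x - a)))
       = exp (- t * a) * (ra / t + s / t^2) - exp (- t * b) * ((ra + s * (b - a)) / t + s / t^2)"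
proof -
  let ?F = "\<lambda>x. - exp (- t * x) * ((ra + s * (x - a)) / t + s / t^2)"
  have "integral {a..b} (\<lambda>x. exp (- t * x) * (ra + s * (x - a))) = ?F b - ?F a"
    by (rule ftc_integral[OF ab])
       (use t in \<open>auto intro!: derivative_eq_intros simp: has_real_derivative_iff_has_vector_derivative[symmetric] field_simps power2_eq_square\<close>)
  also have "?F b - ?F a = exp (- t * a) * (ra / t + s / t^2) - exp (- t * b) * ((ra + s * (b - a)) / t + s / t^2)"
  proof -
    have Fa: "?F a = - exp (- t * a) * (ra / t + s / t^2)" by simp
    show ?thesis unfolding Fa by simp
  qed
  finally show ?thesis .
qed

lemma piece_bound:
  fixes t a b ra rb Eu El :: real
  assumes ab: "3/4 \<le> a" "a < b" and t: "t > 0"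
    and ra: "ff a \<le> ra" and rb: "ff b \<le> rb"
    and Eu: "exp (- t * a) \<le> Eu" and El: "El \<le> exp (- t * b)"
    and al: "0 \<le> ra / t + (rb - ra) / (b - a) / t^2"
    and be: "0 \<le> rb / t + (rb - ra) / (b - a) / t^2"
  shows "integral {a..b} (mf t) \<le> (ra / t + (rb - ra) / (b - a) / t^2) * Eu - (rb / t + (rb - ra) / (b - a) / t^2) * El"
proof -
  define s where "s = (rb - ra) / (b - a)"
  have "integral {a..b} (mf t) \<le> integral {a..b} (\<lambda>x. exp (- t * x) * (ra + s * (x - a)))"
  proof (rule integral_le)
    show "mf t integrable_on {a..b}" by (rule integrable_continuous_interval[OF mf_cont])
    show "(\<lambda>x. exp (- t * x) * (ra + s * (x - a))) integrable_on {a..b}"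
      by (intro integrable_continuous_interval continuous_intros)
    fix x assume x: "x \<in> {a..b}"
    have "ff x \<le> ra + s * (x - a)" unfolding s_def by (rule ff_chord[OF ab _ _ ra rb]) (use x in auto)
    then show "mf t x \<le> exp (- t * x) * (ra + s * (x - a))" unfolding mf_ff by (intro mult_left_mono) auto
  qed
  also have "\<dots> = exp (- t * a) * (ra / t + s / t^2) - exp (- t * b) * ((ra + s * (b - a)) / t + s / t^2)"
    by (rule chord_int[OF t]) (use ab in auto)
  also have "ra + s * (b - a) = rb" using ab by (simp add: s_def)
  also have "exp (- t * a) * (ra / t + s / t^2) \<le> Eu * (ra / t + s / t^2)"
    using Eu al by (intro mult_right_mono) (auto simp: s_def)
  also have "Eu * (ra / t + s / t^2) - exp (- t * b) * (rb / t + s / t^2) \<le> Eu * (ra / t + s / t^2) - El * (rb / t + s / t^2)"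
    using El be by (intro diff_left_mono mult_right_mono) (auto simp: s_def)
  finally show ?thesis by (simp add: s_def mult.commute)
qed

definition QQ :: "real \<Rightarrow> real \<Rightarrow> real" where
  "QQ x t = (1 - x^2/2 + 3*x^4/8) * (1/t) + (- x + 3*x^3/2) * (1/t)^2 + (- 1 + 9*x^2/2) * (1/t)^3 + (9*x) * (1/t)^4 + 9 * (1/t)^5"

lemma aux_QQ_alg:
  fixes t u A B C D :: real
  assumes "t * u = 1"
  shows "t * (A*u + B*u^2 + C*u^3 + D*u^4 + 9*u^5) - (B*u + C*u^2 + D*u^3 + 9*u^4) = A"
  using assms by algebra

lemma dP0: "((\<lambda>x::real. 1 - x^2/2 + 3*x^4/8) has_real_derivative (- x + 3*x^3/2)) (at x)"
  by (auto intro!: derivative_eq_intros simp: field_simps)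
lemma dP1: "((\<lambda>x::real. - x + 3*x^3/2) has_real_derivative (- 1 + 9*x^2/2)) (at x)"
  by (auto intro!: derivative_eq_intros simp: field_simps)
lemma dP2: "((\<lambda>x::real. - 1 + 9*x^2/2) has_real_derivative (9*x)) (at x)"
  by (auto intro!: derivative_eq_intros simp: field_simps)
lemma dP3: "((\<lambda>x::real. 9*x) has_real_derivative 9) (at x)"
  by (auto intro!: derivative_eq_intros)

lemma QQ_deriv:
  fixes t :: real
  assumes t: "t \<noteq> 0"
  shows "((\<lambda>x. QQ x t) has_real_derivative (t * QQ x t - (1 - x^2/2 + 3*x^4/8))) (at x)"
proof -
  let ?u = "1/t"
  have "((\<lambda>x. QQ x t) has_real_derivative
     (- x + 3*x^3/2) * ?u + (- 1 + 9*x^2/2) * ?u^2 + (9*x) * ?u^3 + 9 * ?u^4 + 0 * ?u^5) (at x)"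
    unfolding QQ_def
    by (intro DERIV_add DERIV_cmult_right dP0 dP1 dP2 dP3 DERIV_const)
  moreover have "t * QQ x t - (1 - x^2/2 + 3*x^4/8) = (- x + 3*x^3/2) * ?u + (- 1 + 9*x^2/2) * ?u^2 + (9*x) * ?u^3 + 9 * ?u^4 + 0 * ?u^5"
    unfolding QQ_def using aux_QQ_alg[of t ?u "1 - x^2/2 + 3*x^4/8" "- x + 3*x^3/2" "- 1 + 9*x^2/2" "9*x"] t
    by (simp add: algebra_simps)
  ultimately show ?thesis by simp
qed

lemma piece0_bound:
  fixes t El :: real
  assumes t: "t > 0" and El: "El \<le> exp (- t * (3/4))" and Q: "QQ (3/4) t \<ge> 0"
  shows "integral {0..3/4} (mf t) \<le> QQ 0 t - El * QQ (3/4) t"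
proof -
  let ?P = "\<lambda>x. exp (- t * x) * (1 - x^2/2 + 3*x^4/8)"
  have "integral {0..3/4} (mf t) \<le> integral {0..3/4} ?P"
  proof (rule integral_le)
    show "mf t integrable_on {0..3/4}" by (rule integrable_continuous_interval[OF mf_cont])
    show "?P integrable_on {0..3/4}" by (intro integrable_continuous_interval continuous_intros) auto
    fix x :: real assume x: "x \<in> {0..3/4}"
    show "mf t x \<le> ?P x" unfolding mf_ff by (intro mult_left_mono ff_le_P4) auto
  qed
  also have "integral {0..3/4} ?P = (- exp (- t * (3/4)) * QQ (3/4) t) - (- exp (- t * 0) * QQ 0 t)"
  proof (rule ftc_integral)
    fix x :: real
    have d1: "((\<lambda>x. - exp (- t * x)) has_real_derivative t * exp (- t * x)) (at x)"
      by (auto intro!: derivative_eq_intros)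
    have "((\<lambda>x. - exp (- t * x) * QQ x t) has_real_derivative
           t * exp (- t * x) * QQ x t + (- exp (- t * x)) * (t * QQ x t - (1 - x^2/2 + 3*x^4/8))) (at x)"
      by (rule DERIV_cong[OF DERIV_mult[OF d1 QQ_deriv]]) (use t in \<open>simp_all add: algebra_simps\<close>)
    then have "((\<lambda>x. - exp (- t * x) * QQ x t) has_real_derivative ?P x) (at x)"
      by (rule DERIV_cong) (simp add: algebra_simps)
    then show "((\<lambda>x. - exp (- t * x) * QQ x t) has_vector_derivative ?P x) (at x within {0..3/4})"
      by (simp add: has_real_derivative_iff_has_vector_derivative[symmetric] has_field_derivative_at_within)
  qed simp
  also have "\<dots> \<le> QQ 0 t - El * QQ (3/4) t"
    using El Q by (simp add: mult_right_mono)
  finally show ?thesis .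
qed

lemma tail_bound:
  fixes t A Eu :: real
  assumes t: "t > 0" and A: "A > 0" and Eu: "exp (- t * A) \<le> Eu"
  shows "integral {A..} (mf t) \<le> Eu / (t * A)"
proof -
  have "integral {A..} (mf t) \<le> integral {A..} (\<lambda>x. (1/A) * exp (- t * x))"
  proof (rule integral_le)
    show "mf t integrable_on {A..}" by (rule lap_int[OF mf_cont t mf_bound])
    show "(\<lambda>x. (1/A) * exp (- t * x)) integrable_on {A..}"
      using exp_int_Ici[OF t, of "1/A" A] by (auto simp: integrable_on_def)
    fix x assume x: "x \<in> {A..}"
    then have x0: "x > 0" using A by auto
    have "ff x \<le> 1 / x"
    proof -
      have "sqrt (x^2) \<le> sqrt (x^2 + 1)" by (rule real_sqrt_le_mono) simp
      then have "x \<le> sqrt (x^2 + 1)" using x0 by simp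
      then show ?thesis unfolding ff_def using x0 sq1_pos[of x] by (intro divide_left_mono) (auto intro!: mult_pos_pos)
    qed
    also have "\<dots> \<le> 1 / A" using x A by (intro divide_left_mono) auto
    finally have "ff x \<le> 1 / A" .
    then have "exp (- t * x) * ff x \<le> exp (- t * x) * (1/A)" by (rule mult_left_mono) simp
    then show "mf t x \<le> (1/A) * exp (- t * x)" unfolding mf_ff by (simp add: mult.commute)
  qed
  also have "\<dots> = (1/A) * exp (- t * A) / t"
    using exp_int_Ici[OF t, of "1/A" A] by (rule integral_unique)
  also have "\<dots> \<le> (1/A) * Eu / t" using Eu A t by (intro divide_right_mono mult_left_mono) auto
  finally show ?thesis by (simp add: mult.commute)
qed


abbreviation "qq \<equiv> exp (- (49/200::real))"

lemma qq_lo: "(97838031/125000000) \<le> qq"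
proof -
  have "(97838031/125000000) \<le> 1 - (49/200::real) + (49/200)^2/2 - (49/200)^3/6 + (49/200)^4/24 - (49/200)^5/120" by (simp add: power_divide)
  also have "\<dots> \<le> qq" by (rule exp_ge5) simp
  finally show ?thesis .
qed

lemma qq_hi: "qq \<le> (156542321/200000000)"
proof -
  have "qq \<le> 1 - (49/200::real) + (49/200)^2/2 - (49/200)^3/6 + (49/200)^4/24" by (rule exp_le4) simp
  also have "\<dots> \<le> (156542321/200000000)" by (simp add: power_divide)
  finally show ?thesis .
qed

lemma exp_grid: "exp (- (49/50) * (of_nat k / 4::real)) = qq ^ k"
proof -
  have "exp (- (49/50) * (of_nat k / 4)) = exp (of_nat k * (- (49/200::real)))"
    by (simp add: field_simps)
  also have "\<dots> = qq ^ k" by (rule exp_of_nat_mult)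
  finally show ?thesis .
qed

lemma qq_pow_hi: "exp (- (49/50) * (of_nat k / 4::real)) \<le> ((156542321/200000000)::real) ^ k"
  unfolding exp_grid by (rule power_mono[OF qq_hi]) simp

lemma qq_pow_lo: "((97838031/125000000)::real) ^ k \<le> exp (- (49/50) * (of_nat k / 4::real))"
  unfolding exp_grid by (rule power_mono[OF qq_lo]) simp

lemma ff_le_of:
  assumes r: "0 < r" and h: "1 \<le> r^2 * (a^2 + 1)"
  shows "ff a \<le> r"
proof -
  have "sqrt 1 \<le> sqrt (r^2 * (a^2 + 1))" using h by (rule real_sqrt_le_mono)
  then have "1 \<le> r * sqrt (a^2 + 1)" using r by (simp add: real_sqrt_mult)
  then show ?thesis unfolding ff_def using sq1_pos[of a] by (simp add: divide_le_eq mult.commute)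
qed

lemma split_mf:
  assumes t: "0 < t" and ab: "a \<le> b"
  shows "integral {a..} (mf t) = integral {a..b} (mf t) + integral {b..} (mf t)"
  by (rule Ici_split[OF integrable_continuous_interval[OF mf_cont] lap_int[OF mf_cont t mf_bound] ab])

lemma p0: "integral {0..3/4} (mf (49/50)) \<le> (49988217/100000000)"
proof -
  have e: "(97838031/125000000) ^ 3 \<le> exp (- (49/50) * (3/4::real))"
    using qq_pow_lo[of 3] by simp
  have "integral {0..3/4} (mf (49/50)) \<le> QQ 0 (49/50) - (97838031/125000000) ^ 3 * QQ (3/4) (49/50)"
    by (rule piece0_bound[OF _ e]) (simp_all add: QQ_def power_divide)
  also have "\<dots> \<le> (49988217/100000000)" by (simp add: QQ_def power_divide)
  finally show ?thesis .
qed

lemma p1: "integral {(3/4)..1} (mf (49/50)) \<le> (100407/1250000)"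
proof -
  have eu: "exp (- (49/50) * ((3/4)::real)) \<le> (156542321/200000000) ^ 3"
    using qq_pow_hi[of 3] by simp
  have el: "(97838031/125000000) ^ 4 \<le> exp (- (49/50) * (1::real))"
    using qq_pow_lo[of 4] by simp
  have fa: "ff (3/4) \<le> (4/5)" by (rule ff_le_of) (simp_all add: power_divide)
  have fb: "ff 1 \<le> (707107/1000000)" by (rule ff_le_of) (simp_all add: power_divide)
  have "integral {(3/4)..1} (mf (49/50)) \<le> ((4/5) / (49/50) + ((707107/1000000) - (4/5)) / (1 - (3/4)) / (49/50)^2) * (156542321/200000000) ^ 3 - ((707107/1000000) / (49/50) + ((707107/1000000) - (4/5)) / (1 - (3/4)) / (49/50)^2) * (97838031/125000000) ^ 4"
    by (rule piece_bound[OF _ _ _ fa fb eu el]) (simp_all add: power_divide)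
  also have "\<dots> \<le> (100407/1250000)" by (simp add: power_divide)
  finally show ?thesis .
qed

lemma p2: "integral {1..(5/4)} (mf (49/50)) \<le> (1389/25000)"
proof -
  have eu: "exp (- (49/50) * (1::real)) \<le> (156542321/200000000) ^ 4"
    using qq_pow_hi[of 4] by simp
  have el: "(97838031/125000000) ^ 5 \<le> exp (- (49/50) * ((5/4)::real))"
    using qq_pow_lo[of 5] by simp
  have fa: "ff 1 \<le> (707107/1000000)" by (rule ff_le_of) (simp_all add: power_divide)
  have fb: "ff (5/4) \<le> (78087/125000)" by (rule ff_le_of) (simp_all add: power_divide)
  have "integral {1..(5/4)} (mf (49/50)) \<le> ((707107/1000000) / (49/50) + ((78087/125000) - (707107/1000000)) / ((5/4) - 1) / (49/50)^2) * (156542321/200000000) ^ 4 - ((78087/125000) / (49/50) + ((78087/125000) - (707107/1000000)) / ((5/4) - 1) / (49/50)^2) * (97838031/125000000) ^ 5"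
    by (rule piece_bound[OF _ _ _ fa fb eu el]) (simp_all add: power_divide)
  also have "\<dots> \<le> (1389/25000)" by (simp add: power_divide)
  finally show ?thesis .
qed

lemma p3: "integral {(5/4)..(3/2)} (mf (49/50)) \<le> (240673/6250000)"
proof -
  have eu: "exp (- (49/50) * ((5/4)::real)) \<le> (156542321/200000000) ^ 5"
    using qq_pow_hi[of 5] by simp
  have el: "(97838031/125000000) ^ 6 \<le> exp (- (49/50) * ((3/2)::real))"
    using qq_pow_lo[of 6] by simp
  have fa: "ff (5/4) \<le> (78087/125000)" by (rule ff_le_of) (simp_all add: power_divide)
  have fb: "ff (3/2) \<le> (554701/1000000)" by (rule ff_le_of) (simp_all add: power_divide)
  have "integral {(5/4)..(3/2)} (mf (49/50)) \<le> ((78087/125000) / (49/50) + ((554701/1000000) - (78087/125000)) / ((3/2) - (5/4)) / (49/50)^2) * (156542321/200000000) ^ 5 - ((554701/1000000) / (49/50) + ((554701/1000000) - (78087/125000)) / ((3/2) - (5/4)) / (49/50)^2) * (97838031/125000000) ^ 6"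
    by (rule piece_bound[OF _ _ _ fa fb eu el]) (simp_all add: power_divide)
  also have "\<dots> \<le> (240673/6250000)" by (simp add: power_divide)
  finally show ?thesis .
qed

lemma p4: "integral {(3/2)..(7/4)} (mf (49/50)) \<le> (167823/6250000)"
proof -
  have eu: "exp (- (49/50) * ((3/2)::real)) \<le> (156542321/200000000) ^ 6"
    using qq_pow_hi[of 6] by simp
  have el: "(97838031/125000000) ^ 7 \<le> exp (- (49/50) * ((7/4)::real))"
    using qq_pow_lo[of 7] by simp
  have fa: "ff (3/2) \<le> (554701/1000000)" by (rule ff_le_of) (simp_all add: power_divide)
  have fb: "ff (7/4) \<le> (496139/1000000)" by (rule ff_le_of) (simp_all add: power_divide)
  have "integral {(3/2)..(7/4)} (mf (49/50)) \<le> ((554701/1000000) / (49/50) + ((496139/1000000) - (554701/1000000)) / ((7/4) - (3/2)) / (49/50)^2) * (156542321/200000000) ^ 6 - ((496139/1000000) / (49/50) + ((496139/1000000) - (554701/1000000)) / ((7/4) - (3/2)) / (49/50)^2) * (97838031/125000000) ^ 7"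
    by (rule piece_bound[OF _ _ _ fa fb eu el]) (simp_all add: power_divide)
  also have "\<dots> \<le> (167823/6250000)" by (simp add: power_divide)
  finally show ?thesis .
qed

lemma p5: "integral {(7/4)..2} (mf (49/50)) \<le> (377297/20000000)"
proof -
  have eu: "exp (- (49/50) * ((7/4)::real)) \<le> (156542321/200000000) ^ 7"
    using qq_pow_hi[of 7] by simp
  have el: "(97838031/125000000) ^ 8 \<le> exp (- (49/50) * (2::real))"
    using qq_pow_lo[of 8] by simp
  have fa: "ff (7/4) \<le> (496139/1000000)" by (rule ff_le_of) (simp_all add: power_divide)
  have fb: "ff 2 \<le> (223607/500000)" by (rule ff_le_of) (simp_all add: power_divide)
  have "integral {(7/4)..2} (mf (49/50)) \<le> ((496139/1000000) / (49/50) + ((223607/500000) - (496139/1000000)) / (2 - (7/4)) / (49/50)^2) * (156542321/200000000) ^ 7 - ((223607/500000) / (49/50) + ((223607/500000) - (496139/1000000)) / (2 - (7/4)) / (49/50)^2) * (97838031/125000000) ^ 8"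
    by (rule piece_bound[OF _ _ _ fa fb eu el]) (simp_all add: power_divide)
  also have "\<dots> \<le> (377297/20000000)" by (simp add: power_divide)
  finally show ?thesis .
qed

lemma p6: "integral {2..(5/2)} (mf (49/50)) \<le> (574103/25000000)"
proof -
  have eu: "exp (- (49/50) * (2::real)) \<le> (156542321/200000000) ^ 8"
    using qq_pow_hi[of 8] by simp
  have el: "(97838031/125000000) ^ 10 \<le> exp (- (49/50) * ((5/2)::real))"
    using qq_pow_lo[of 10] by simp
  have fa: "ff 2 \<le> (223607/500000)" by (rule ff_le_of) (simp_all add: power_divide)
  have fb: "ff (5/2) \<le> (371391/1000000)" by (rule ff_le_of) (simp_all add: power_divide)
  have "integral {2..(5/2)} (mf (49/50)) \<le> ((223607/500000) / (49/50) + ((371391/1000000) - (223607/500000)) / ((5/2) - 2) / (49/50)^2) * (156542321/200000000) ^ 8 - ((371391/1000000) / (49/50) + ((371391/1000000) - (223607/500000)) / ((5/2) - 2) / (49/50)^2) * (97838031/125000000) ^ 10"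
    by (rule piece_bound[OF _ _ _ fa fb eu el]) (simp_all add: power_divide)
  also have "\<dots> \<le> (574103/25000000)" by (simp add: power_divide)
  finally show ?thesis .
qed

lemma p7: "integral {(5/2)..3} (mf (49/50)) \<le> (5903/500000)"
proof -
  have eu: "exp (- (49/50) * ((5/2)::real)) \<le> (156542321/200000000) ^ 10"
    using qq_pow_hi[of 10] by simp
  have el: "(97838031/125000000) ^ 12 \<le> exp (- (49/50) * (3::real))"
    using qq_pow_lo[of 12] by simp
  have fa: "ff (5/2) \<le> (371391/1000000)" by (rule ff_le_of) (simp_all add: power_divide)
  have fb: "ff 3 \<le> (79057/250000)" by (rule ff_le_of) (simp_all add: power_divide)
  have "integral {(5/2)..3} (mf (49/50)) \<le> ((371391/1000000) / (49/50) + ((79057/250000) - (371391/1000000)) / (3 - (5/2)) / (49/50)^2) * (156542321/200000000) ^ 10 - ((79057/250000) / (49/50) + ((79057/250000) - (371391/1000000)) / (3 - (5/2)) / (49/50)^2) * (97838031/125000000) ^ 12"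
    by (rule piece_bound[OF _ _ _ fa fb eu el]) (simp_all add: power_divide)
  also have "\<dots> \<le> (5903/500000)" by (simp add: power_divide)
  finally show ?thesis .
qed

lemma p8: "integral {3..(7/2)} (mf (49/50)) \<le> (621113/100000000)"
proof -
  have eu: "exp (- (49/50) * (3::real)) \<le> (156542321/200000000) ^ 12"
    using qq_pow_hi[of 12] by simp
  have el: "(97838031/125000000) ^ 14 \<le> exp (- (49/50) * ((7/2)::real))"
    using qq_pow_lo[of 14] by simp
  have fa: "ff 3 \<le> (79057/250000)" by (rule ff_le_of) (simp_all add: power_divide)
  have fb: "ff (7/2) \<le> (137361/500000)" by (rule ff_le_of) (simp_all add: power_divide)
  have "integral {3..(7/2)} (mf (49/50)) \<le> ((79057/250000) / (49/50) + ((137361/500000) - (79057/250000)) / ((7/2) - 3) / (49/50)^2) * (156542321/200000000) ^ 12 - ((137361/500000) / (49/50) + ((137361/500000) - (79057/250000)) / ((7/2) - 3) / (49/50)^2) * (97838031/125000000) ^ 14"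
    by (rule piece_bound[OF _ _ _ fa fb eu el]) (simp_all add: power_divide)
  also have "\<dots> \<le> (621113/100000000)" by (simp add: power_divide)
  finally show ?thesis .
qed

lemma p9: "integral {(7/2)..4} (mf (49/50)) \<le> (16643/5000000)"
proof -
  have eu: "exp (- (49/50) * ((7/2)::real)) \<le> (156542321/200000000) ^ 14"
    using qq_pow_hi[of 14] by simp
  have el: "(97838031/125000000) ^ 16 \<le> exp (- (49/50) * (4::real))"
    using qq_pow_lo[of 16] by simp
  have fa: "ff (7/2) \<le> (137361/500000)" by (rule ff_le_of) (simp_all add: power_divide)
  have fb: "ff 4 \<le> (30317/125000)" by (rule ff_le_of) (simp_all add: power_divide)
  have "integral {(7/2)..4} (mf (49/50)) \<le> ((137361/500000) / (49/50) + ((30317/125000) - (137361/500000)) / (4 - (7/2)) / (49/50)^2) * (156542321/200000000) ^ 14 - ((30317/125000) / (49/50) + ((30317/125000) - (137361/500000)) / (4 - (7/2)) / (49/50)^2) * (97838031/125000000) ^ 16"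
    by (rule piece_bound[OF _ _ _ fa fb eu el]) (simp_all add: power_divide)
  also have "\<dots> \<le> (16643/5000000)" by (simp add: power_divide)
  finally show ?thesis .
qed

lemma p10: "integral {4..5} (mf (49/50)) \<le> (28217/10000000)"
proof -
  have eu: "exp (- (49/50) * (4::real)) \<le> (156542321/200000000) ^ 16"
    using qq_pow_hi[of 16] by simp
  have el: "(97838031/125000000) ^ 20 \<le> exp (- (49/50) * (5::real))"
    using qq_pow_lo[of 20] by simp
  have fa: "ff 4 \<le> (30317/125000)" by (rule ff_le_of) (simp_all add: power_divide)
  have fb: "ff 5 \<le> (196117/1000000)" by (rule ff_le_of) (simp_all add: power_divide)
  have "integral {4..5} (mf (49/50)) \<le> ((30317/125000) / (49/50) + ((196117/1000000) - (30317/125000)) / (5 - 4) / (49/50)^2) * (156542321/200000000) ^ 16 - ((196117/1000000) / (49/50) + ((196117/1000000) - (30317/125000)) / (5 - 4) / (49/50)^2) * (97838031/125000000) ^ 20"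
    by (rule piece_bound[OF _ _ _ fa fb eu el]) (simp_all add: power_divide)
  also have "\<dots> \<le> (28217/10000000)" by (simp add: power_divide)
  finally show ?thesis .
qed

lemma p11: "integral {5..6} (mf (49/50)) \<le> (86797/100000000)"
proof -
  have eu: "exp (- (49/50) * (5::real)) \<le> (156542321/200000000) ^ 20"
    using qq_pow_hi[of 20] by simp
  have el: "(97838031/125000000) ^ 24 \<le> exp (- (49/50) * (6::real))"
    using qq_pow_lo[of 24] by simp
  have fa: "ff 5 \<le> (196117/1000000)" by (rule ff_le_of) (simp_all add: power_divide)
  have fb: "ff 6 \<le> (164399/1000000)" by (rule ff_le_of) (simp_all add: power_divide)
  have "integral {5..6} (mf (49/50)) \<le> ((196117/1000000) / (49/50) + ((164399/1000000) - (196117/1000000)) / (6 - 5) / (49/50)^2) * (156542321/200000000) ^ 20 - ((164399/1000000) / (49/50) + ((164399/1000000) - (196117/1000000)) / (6 - 5) / (49/50)^2) * (97838031/125000000) ^ 24"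
    by (rule piece_bound[OF _ _ _ fa fb eu el]) (simp_all add: power_divide)
  also have "\<dots> \<le> (86797/100000000)" by (simp add: power_divide)
  finally show ?thesis .
qed

lemma p12: "integral {6..8} (mf (49/50)) \<le> (7373/20000000)"
proof -
  have eu: "exp (- (49/50) * (6::real)) \<le> (156542321/200000000) ^ 24"
    using qq_pow_hi[of 24] by simp
  have el: "(97838031/125000000) ^ 32 \<le> exp (- (49/50) * (8::real))"
    using qq_pow_lo[of 32] by simp
  have fa: "ff 6 \<le> (164399/1000000)" by (rule ff_le_of) (simp_all add: power_divide)
  have fb: "ff 8 \<le> (24807/200000)" by (rule ff_le_of) (simp_all add: power_divide)
  have "integral {6..8} (mf (49/50)) \<le> ((164399/1000000) / (49/50) + ((24807/200000) - (164399/1000000)) / (8 - 6) / (49/50)^2) * (156542321/200000000) ^ 24 - ((24807/200000) / (49/50) + ((24807/200000) - (164399/1000000)) / (8 - 6) / (49/50)^2) * (97838031/125000000) ^ 32"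
    by (rule piece_bound[OF _ _ _ fa fb eu el]) (simp_all add: power_divide)
  also have "\<dots> \<le> (7373/20000000)" by (simp add: power_divide)
  finally show ?thesis .
qed

lemma pt: "integral {8..} (mf (49/50)) \<le> (5023/100000000)"
proof -
  have eu: "exp (- (49/50) * (8::real)) \<le> (156542321/200000000) ^ 32"
    using qq_pow_hi[of 32] by simp
  have "integral {8..} (mf (49/50)) \<le> (156542321/200000000) ^ 32 / ((49/50) * 8)"
    by (rule tail_bound[OF _ _ eu]) simp_all
  also have "\<dots> \<le> (5023/100000000)" by (simp add: power_divide)
  finally show ?thesis .
qed

lemma M_t1_bound: "M (49/50) \<le> (768411/1000000)"
proof -
  have s0: "integral {0..} (mf (49/50)) = integral {0..(3/4)} (mf (49/50)) + integral {(3/4)..} (mf (49/50))"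
    by (rule split_mf) simp_all
  have s1: "integral {(3/4)..} (mf (49/50)) = integral {(3/4)..1} (mf (49/50)) + integral {1..} (mf (49/50))"
    by (rule split_mf) simp_all
  have s2: "integral {1..} (mf (49/50)) = integral {1..(5/4)} (mf (49/50)) + integral {(5/4)..} (mf (49/50))"
    by (rule split_mf) simp_all
  have s3: "integral {(5/4)..} (mf (49/50)) = integral {(5/4)..(3/2)} (mf (49/50)) + integral {(3/2)..} (mf (49/50))"
    by (rule split_mf) simp_all
  have s4: "integral {(3/2)..} (mf (49/50)) = integral {(3/2)..(7/4)} (mf (49/50)) + integral {(7/4)..} (mf (49/50))"
    by (rule split_mf) simp_all
  have s5: "integral {(7/4)..} (mf (49/50)) = integral {(7/4)..2} (mf (49/50)) + integral {2..} (mf (49/50))"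
    by (rule split_mf) simp_all
  have s6: "integral {2..} (mf (49/50)) = integral {2..(5/2)} (mf (49/50)) + integral {(5/2)..} (mf (49/50))"
    by (rule split_mf) simp_all
  have s7: "integral {(5/2)..} (mf (49/50)) = integral {(5/2)..3} (mf (49/50)) + integral {3..} (mf (49/50))"
    by (rule split_mf) simp_all
  have s8: "integral {3..} (mf (49/50)) = integral {3..(7/2)} (mf (49/50)) + integral {(7/2)..} (mf (49/50))"
    by (rule split_mf) simp_all
  have s9: "integral {(7/2)..} (mf (49/50)) = integral {(7/2)..4} (mf (49/50)) + integral {4..} (mf (49/50))"
    by (rule split_mf) simp_all
  have s10: "integral {4..} (mf (49/50)) = integral {4..5} (mf (49/50)) + integral {5..} (mf (49/50))"
    by (rule split_mf) simp_all
  have s11: "integral {5..} (mf (49/50)) = integral {5..6} (mf (49/50)) + integral {6..} (mf (49/50))"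
    by (rule split_mf) simp_all
  have s12: "integral {6..} (mf (49/50)) = integral {6..8} (mf (49/50)) + integral {8..} (mf (49/50))"
    by (rule split_mf) simp_all
  show ?thesis unfolding M_mf using s0 s1 s2 s3 s4 s5 s6 s7 s8 s9 s10 s11 s12 p0 p1 p2 p3 p4 p5 p6 p7 p8 p9 p10 p11 p12 pt by linarith
qed


definition hh :: "real \<Rightarrow> real" where "hh x = sinc x - ff x"

lemma hh_cont: "continuous_on S hh"
  unfolding hh_def by (intro continuous_intros cont_sinc_on ff_cont)

lemma ff_le1: "ff x \<le> 1"
  unfolding ff_def using sq1_pos[of x] by (simp add: divide_le_eq)

lemma ff_antimono:
  assumes "0 \<le> a" "a \<le> x"
  shows "ff x \<le> ff a"
proof -
  have "a^2 \<le> x^2" using assms by (intro power_mono) auto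
  then have "sqrt (a^2 + 1) \<le> sqrt (x^2 + 1)" by simp
  then show ?thesis unfolding ff_def using sq1_pos[of a] by (intro divide_left_mono) (auto intro!: mult_pos_pos)
qed

lemma ff_ge_of:
  assumes r: "0 < r" and h: "r^2 * (b^2 + 1) \<le> 1"
  shows "r \<le> ff b"
proof -
  have "sqrt (r^2 * (b^2 + 1)) \<le> sqrt 1" using h by (rule real_sqrt_le_mono)
  then have "r * sqrt (b^2 + 1) \<le> 1" using r by (simp add: real_sqrt_mult)
  then show ?thesis unfolding ff_def using sq1_pos[of b] by (simp add: le_divide_eq mult.commute)
qed

lemma sinc_ge_T7:
  assumes x: "0 \<le> x"
  shows "1 - x^2/6 + x^4/120 - x^6/5040 \<le> sinc x"
proof (cases "x = 0")
  case False
  then have xp: "x > 0" using x by auto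
  have "x * (1 - x^2/6 + x^4/120 - x^6/5040) = x - x^3/6 + x^5/120 - x^7/5040"
    by (simp add: algebra_simps eval_nat_numeral)
  also have "\<dots> \<le> sin x" by (rule sin_ge7[OF x])
  finally show ?thesis using xp False by (simp add: le_divide_eq mult.commute)
qed simp

lemma sinc_le_V9:
  assumes x: "0 \<le> x"
  shows "sinc x \<le> 1 - x^2/6 + x^4/120 - x^6/5040 + x^8/362880"
proof (cases "x = 0")
  case False
  then have xp: "x > 0" using x by auto
  have "sin x \<le> x - x^3/6 + x^5/120 - x^7/5040 + x^9/362880" by (rule sin_le9[OF x])
  also have "\<dots> = x * (1 - x^2/6 + x^4/120 - x^6/5040 + x^8/362880)"
    by (simp add: algebra_simps eval_nat_numeral)
  finally show ?thesis using xp False by (simp add: divide_le_eq mult.commute)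
qed simp

lemma pv_T7: "pv [1, 0, -1/6, 0, 1/120, 0, -1/5040] 0 x = 1 - x^2/6 + x^4/120 - x^6/5040"
  by (simp add: algebra_simps eval_nat_numeral)

lemma pv_V9: "pv [1, 0, -1/6, 0, 1/120, 0, -1/5040, 0, 1/362880] 0 x = 1 - x^2/6 + x^4/120 - x^6/5040 + x^8/362880"
  by (simp add: algebra_simps eval_nat_numeral)

lemma T7_lo:
  assumes "0 \<le> a" "a \<le> x" "x \<le> b"
  shows "plo [1, 0, -1/6, 0, 1/120, 0, -1/5040] 0 a b \<le> sinc x"
  using pv_bounds[OF assms, of "[1, 0, -1/6, 0, 1/120, 0, -1/5040]" 0] sinc_ge_T7[of x] assms
  unfolding pv_T7 by linarith

lemma V9_hi:
  assumes "0 \<le> a" "a \<le> x" "x \<le> b"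
  shows "sinc x \<le> phi [1, 0, -1/6, 0, 1/120, 0, -1/5040, 0, 1/362880] 0 a b"
  using pv_bounds[OF assms, of "[1, 0, -1/6, 0, 1/120, 0, -1/5040, 0, 1/362880]" 0] sinc_le_V9[of x] assms
  unfolding pv_V9 by linarith

lemma hh_pos_chain:
  assumes ab: "0 \<le> a" "a \<le> x" "x \<le> b" and r: "0 < r" "1 \<le> r^2 * (a^2 + 1)"
    and c: "r \<le> plo [1, 0, -1/6, 0, 1/120, 0, -1/5040] 0 a b"
  shows "0 \<le> hh x"
proof -
  have "ff x \<le> ff a" by (rule ff_antimono) (use ab in auto)
  also have "\<dots> \<le> r" by (rule ff_le_of[OF r])
  also have "\<dots> \<le> sinc x" using c T7_lo[OF ab] by linarith
  finally show ?thesis unfolding hh_def by simp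
qed

lemma aux_lin3:
  fixes y z2 z3 :: real
  assumes "z2 \<le> y * (81/100)" "z3 \<le> y * (81/100) * (81/100)" "0 \<le> y"
  shows "1 - y/2 + 3*z2/8 \<le> 1 - y/6 + z2/120 - z3/5040"
  using assms by linarith

lemma hh_nonneg_small:
  assumes x: "0 \<le> x" "x \<le> 9/10"
  shows "0 \<le> hh x"
proof -
  have "x^2 \<le> (9/10)^2" using x by (intro power_mono) auto
  then have x2: "x^2 \<le> 81/100" by (simp add: power2_eq_square)
  have x4: "x^4 = x^2 * x^2" by (simp add: eval_nat_numeral)
  have x6: "x^6 = x^2 * x^2 * x^2" by (simp add: eval_nat_numeral)
  have "x^2 * x^2 \<le> x^2 * (81/100)" using x2 by (intro mult_left_mono) auto
  moreover have "x^2 * x^2 * x^2 \<le> x^2 * (81/100) * (81/100)"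
    using x2 by (intro mult_mono mult_left_mono) (auto intro: mult_nonneg_nonneg)
  moreover have "0 \<le> x^2" by simp
  ultimately have "1 - x^2/2 + 3*x^4/8 \<le> 1 - x^2/6 + x^4/120 - x^6/5040"
    unfolding x4 x6 by (rule aux_lin3)
  then have "ff x \<le> 1 - x^2/6 + x^4/120 - x^6/5040" using ff_le_P4[of x] by linarith
  then show ?thesis unfolding hh_def using sinc_ge_T7[OF x(1)] by linarith
qed

lemma hh_nonneg:
  assumes x: "0 \<le> x" "x \<le> 9/5"
  shows "0 \<le> hh x"
proof -
  consider "x \<le> 9/10" | "9/10 \<le> x \<and> x \<le> 5/4" | "5/4 \<le> x \<and> x \<le> 153/100" | "153/100 \<le> x \<and> x \<le> 43/25" | "43/25 \<le> x \<and> x \<le> 9/5"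
    using x by linarith
  then show ?thesis
  proof cases
    case 1 then show ?thesis using hh_nonneg_small x by auto
  next
    case 2 then show ?thesis by (intro hh_pos_chain[of "9/10" x "5/4" "148659/200000"]) (simp_all add: power_divide)
  next
    case 3 then show ?thesis by (intro hh_pos_chain[of "5/4" x "153/100" "78087/125000"]) (simp_all add: power_divide)
  next
    case 4 then show ?thesis by (intro hh_pos_chain[of "153/100" x "43/25" "273551/500000"]) (simp_all add: power_divide)
  next
    case 5 then show ?thesis by (intro hh_pos_chain[of "43/25" x "9/5" "502621/1000000"]) (simp_all add: power_divide)
  qed
qed


definition pp :: "real \<Rightarrow> real" where "pp x = 1/54 + (53/500) * exp (- 3 * (x - 9/5))"

lemma pp_pos: "0 \<le> pp x" unfolding pp_def by (simp add: add_nonneg_nonneg)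

lemma pp_cont: "continuous_on S pp" unfolding pp_def by (intro continuous_intros)

lemma e3_lo: "(2963269/4000000::real) \<le> exp (- (3/10))"
proof -
  have "(2963269/4000000::real) \<le> 1 - (3/10::real) + (3/10)^2/2 - (3/10)^3/6 + (3/10)^4/24 - (3/10)^5/120"
    by (simp add: power_divide)
  also have "\<dots> \<le> exp (- (3/10))" by (rule exp_ge5) simp
  finally show ?thesis .
qed

lemma hh_p_chain:
  fixes a b x r :: real and k :: nat
  assumes ab: "0 \<le> a" "a \<le> x" "x \<le> b" and r: "0 < r" "r^2 * (b^2 + 1) \<le> 1"
    and kb: "b - 9/5 = of_nat k / 10"
    and c: "phi [1, 0, -1/6, 0, 1/120, 0, -1/5040, 0, 1/362880] 0 a b - r \<le> 1/54 + (53/500) * (2963269/4000000) ^ k"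
  shows "hh x \<le> pp x"
proof -
  have "r \<le> ff b" by (rule ff_ge_of[OF r])
  also have "ff b \<le> ff x" by (rule ff_antimono) (use ab in auto)
  finally have f: "r \<le> ff x" .
  have "hh x \<le> phi [1, 0, -1/6, 0, 1/120, 0, -1/5040, 0, 1/362880] 0 a b - r"
    unfolding hh_def using V9_hi[OF ab] f by linarith
  also have "\<dots> \<le> 1/54 + (53/500) * (2963269/4000000) ^ k" by (rule c)
  also have "(2963269/4000000::real) ^ k \<le> exp (- (3/10)) ^ k"
    by (rule power_mono[OF e3_lo]) simp
  also have "exp (- (3/10::real)) ^ k = exp (- 3 * (b - 9/5))"
    unfolding kb by (simp add: exp_of_nat_mult[symmetric] field_simps)
  also have "exp (- 3 * (b - 9/5)) \<le> exp (- 3 * (x - 9/5))" using ab by simp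
  finally show ?thesis unfolding pp_def by simp
qed

lemma hh_neg_chain:
  fixes a b x r :: real
  assumes ab: "0 \<le> a" "a \<le> x" "x \<le> b" and r: "0 < r" "r^2 * (b^2 + 1) \<le> 1"
    and c: "phi [1, 0, -1/6, 0, 1/120, 0, -1/5040, 0, 1/362880] 0 a b \<le> r"
  shows "hh x \<le> pp x"
proof -
  have "r \<le> ff b" by (rule ff_ge_of[OF r])
  also have "ff b \<le> ff x" by (rule ff_antimono) (use ab in auto)
  finally have f: "r \<le> ff x" .
  have "hh x \<le> 0" unfolding hh_def using V9_hi[OF ab] f c by linarith
  then show ?thesis using pp_pos[of x] by linarith
qed

lemma hh_large:
  fixes x :: real
  assumes x: "3 \<le> x"
  shows "hh x \<le> pp x"
proof -
  have x0: "x > 0" using x by simp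
  have s: "sinc x \<le> 1 / x" using x0 by (simp add: divide_right_mono)
  have sq: "sqrt (x^2 + 1) \<le> x + 1 / (2*x)"
  proof -
    have "(x + 1/(2*x))^2 = x^2 + 1 + 1/(4*x^2)" using x0 by (simp add: power2_eq_square field_simps)
    then have "x^2 + 1 \<le> (x + 1/(2*x))^2" using x0 by simp
    then have "sqrt (x^2 + 1) \<le> sqrt ((x + 1/(2*x))^2)" by (rule real_sqrt_le_mono)
    also have "\<dots> = x + 1/(2*x)" using x0 by simp
    finally show ?thesis .
  qed
  have pos: "0 < x + 1/(2*x)" using x0 by (simp add: add_pos_pos)
  have "1 / (x + 1/(2*x)) \<le> ff x"
    unfolding ff_def using sq sq1_pos[of x] pos by (intro divide_left_mono) (auto intro!: mult_pos_pos)
  moreover have "1 / (x + 1/(2*x)) = 2*x / (2*x^2 + 1)"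
    using x0 by (simp add: field_simps power2_eq_square)
  moreover have "1 / x - 2*x / (2*x^2 + 1) = 1 / (x * (2*x^2 + 1))"
  proof -
    have p2: "2*x^2 + 1 \<noteq> 0" by (metis add_nonneg_pos zero_le_power2 zero_less_one mult_nonneg_nonneg zero_le_numeral less_irrefl)
    show ?thesis using x0 p2 by (simp add: field_simps power2_eq_square)
  qed
  moreover have "1 / (x * (2*x^2 + 1)) \<le> 1/54"
  proof -
    have "x^2 \<ge> 3^2" using x by (intro power_mono) auto
    then have "2*x^2 + 1 \<ge> 19" by simp
    then have "x * (2*x^2 + 1) \<ge> 3 * 19" using x by (intro mult_mono) auto
    then show ?thesis by (simp add: divide_le_eq)
  qed
  ultimately have "hh x \<le> 1/54" unfolding hh_def using s by linarith
  also have "1/54 \<le> pp x" unfolding pp_def by simp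
  finally show ?thesis .
qed

lemma hh_le_pp:
  assumes x: "9/5 \<le> x"
  shows "hh x \<le> pp x"
proof -
  consider "x \<le> 19/10" | "19/10 \<le> x \<and> x \<le> 2" | "2 \<le> x \<and> x \<le> 21/10" | "21/10 \<le> x \<and> x \<le> 11/5"
    | "11/5 \<le> x \<and> x \<le> 23/10" | "23/10 \<le> x \<and> x \<le> 121/50" | "121/50 \<le> x \<and> x \<le> 129/50"
    | "129/50 \<le> x \<and> x \<le> 277/100" | "277/100 \<le> x \<and> x \<le> 299/100" | "299/100 \<le> x \<and> x \<le> 3" | "3 \<le> x"
    using x by linarith
  then show ?thesis
  proof cases
    case 1 then show ?thesis using x by (intro hh_p_chain[of "9/5" x "19/10" "232873/500000" 1]) (simp_all add: power_divide)
  next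
    case 2 then show ?thesis by (intro hh_p_chain[of "19/10" x 2 "447213/1000000" 2]) (simp_all add: power_divide)
  next
    case 3 then show ?thesis by (intro hh_p_chain[of 2 x "21/10" "429933/1000000" 3]) (simp_all add: power_divide)
  next
    case 4 then show ?thesis by (intro hh_p_chain[of "21/10" x "11/5" "206901/500000" 4]) (simp_all add: power_divide)
  next
    case 5 then show ?thesis by (intro hh_p_chain[of "11/5" x "23/10" "199363/500000" 5]) (simp_all add: power_divide)
  next
    case 6 then show ?thesis by (intro hh_neg_chain[of "23/10" x "121/50" "381901/1000000"]) (simp_all add: power_divide)
  next
    case 7 then show ?thesis by (intro hh_neg_chain[of "121/50" x "129/50" "361399/1000000"]) (simp_all add: power_divide)
  next
    case 8 then show ?thesis by (intro hh_neg_chain[of "129/50" x "277/100" "339561/1000000"]) (simp_all add: power_divide)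
  next
    case 9 then show ?thesis by (intro hh_neg_chain[of "277/100" x "299/100" "317179/1000000"]) (simp_all add: power_divide)
  next
    case 10 then show ?thesis by (intro hh_neg_chain[of "299/100" x 3 "316227/1000000"]) (simp_all add: power_divide)
  next
    case 11 then show ?thesis by (rule hh_large)
  qed
qed


lemma hh_bound: "norm (exp (-(t*x)) * hh x) \<le> 2 * exp (- t * x)"
proof -
  have "\<bar>hh x\<bar> \<le> 2" unfolding hh_def using abs_sinc_le[of x] ff_pos[of x] ff_le1[of x] by linarith
  then show ?thesis by (simp add: abs_mult mult.commute mult_right_mono)
qed

lemma g_cont: "continuous_on S (\<lambda>x. exp (-(t*x)) * hh x)"
  by (intro continuous_intros hh_cont)

lemma g_int: "t > 0 \<Longrightarrow> (\<lambda>x. exp (-(t*x)) * hh x) integrable_on {a..}"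
  by (rule lap_int[OF g_cont _ hh_bound])

lemma D_eq:
  assumes t: "t > 0"
  shows "integral {0..} (\<lambda>x. exp (-(t*x)) * hh x) = arccot t - M t"
proof -
  have "integral {0..} (\<lambda>x. exp (-(t*x)) * hh x) = integral {0..} (\<lambda>x. exp (-(t*x)) * sinc x - mf t x)"
    by (rule integral_cong) (simp add: hh_def mf_ff algebra_simps)
  also have "\<dots> = integral {0..} (\<lambda>x. exp (-(t*x)) * sinc x) - integral {0..} (mf t)"
    by (rule integral_diff[OF sinc_lap(1)[OF t] mf_int[OF t]])
  also have "\<dots> = arccot t - M t" by (simp add: sinc_lap(2)[OF t] M_mf)
  finally show ?thesis .
qed

lemma PP_int:
  fixes t0 :: real
  assumes t0: "t0 > 0"
  shows "((\<lambda>x. exp (-(t0*x)) * pp x) has_integral exp (-(t0*(9/5))) * (1/(54*t0) + (53/500)/(t0+3))) {9/5..}"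
proof -
  have t3: "t0 + 3 > 0" using t0 by simp
  have h1: "((\<lambda>x. (1/54) * exp (- t0 * x)) has_integral (1/54) * exp (- t0 * (9/5)) / t0) {9/5..}"
    by (rule exp_int_Ici[OF t0])
  have h2: "((\<lambda>x. ((53/500) * exp (27/5)) * exp (- (t0+3) * x)) has_integral ((53/500) * exp (27/5)) * exp (- (t0+3) * (9/5)) / (t0+3)) {9/5..}"
    by (rule exp_int_Ici[OF t3])
  have h: "((\<lambda>x. (1/54) * exp (- t0 * x) + ((53/500) * exp (27/5)) * exp (- (t0+3) * x)) has_integral
      (1/54) * exp (- t0 * (9/5)) / t0 + ((53/500) * exp (27/5)) * exp (- (t0+3) * (9/5)) / (t0+3)) {9/5..}"
    by (rule has_integral_add[OF h1 h2])
  have fe: "(1/54) * exp (- t0 * x) + ((53/500) * exp (27/5)) * exp (- (t0+3) * x) = exp (-(t0*x)) * pp x" for x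
  proof -
    have "exp (27/5) * exp (- (t0+3) * x) = exp (-(t0*x)) * exp (- 3 * (x - 9/5))"
      by (simp add: exp_add[symmetric] algebra_simps)
    then show ?thesis unfolding pp_def by (simp add: algebra_simps)
  qed
  have ve: "(1/54) * exp (- t0 * (9/5)) / t0 + ((53/500) * exp (27/5)) * exp (- (t0+3) * (9/5)) / (t0+3)
      = exp (-(t0*(9/5))) * (1/(54*t0) + (53/500)/(t0+3))"
  proof -
    have ar: "27/5 + (- (t0+3) * (9/5)) = -(t0*(9/5))" by (simp add: field_simps)
    have "exp (27/5) * exp (- (t0+3) * (9/5)) = exp (27/5 + (- (t0+3) * (9/5)))"
      by (simp only: exp_add)
    also have "\<dots> = exp (-(t0*(9/5)))" by (simp only: ar)
    finally have "exp (27/5) * exp (- (t0+3) * (9/5)) = exp (-(t0*(9/5)))" .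
    then show ?thesis by (simp add: algebra_simps)
  qed
  show ?thesis using h unfolding fe ve .
qed

lemma sign_arg:
  fixes t0 t :: real
  assumes t0: "t0 > 0" and tt: "t0 \<le> t"
  shows "exp (-((t - t0)*(9/5))) * (arccot t0 - M t0 - exp (-(t0*(9/5))) * (1/(54*t0) + (53/500)/(t0+3))) \<le> arccot t - M t"
proof -
  have t: "t > 0" using t0 tt by simp
  define w where "w = exp (-((t - t0)*(9/5)))"
  define PP where "PP = exp (-(t0*(9/5))) * (1/(54*t0) + (53/500)/(t0+3))"
  let ?g = "\<lambda>s x. exp (-(s*x)) * hh x"
  have split: "integral {0..} (?g s) = integral {0..9/5} (?g s) + integral {9/5..} (?g s)" if "s > 0" for s
    by (rule Ici_split[OF integrable_continuous_interval[OF g_cont] g_int[OF that]]) simp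
  have fac: "exp (-(t*x)) = exp (-(t0*x)) * exp (-((t - t0)*x))" for x
    by (simp add: exp_add[symmetric] algebra_simps)
  have A: "w * integral {0..9/5} (?g t0) \<le> integral {0..9/5} (?g t)"
  proof -
    have "integral {0..9/5} (\<lambda>x. w * ?g t0 x) \<le> integral {0..9/5} (?g t)"
    proof (rule integral_le)
      show "(\<lambda>x. w * ?g t0 x) integrable_on {0..9/5}" by (intro integrable_continuous_interval continuous_intros hh_cont)
      show "?g t integrable_on {0..9/5}" by (rule integrable_continuous_interval[OF g_cont])
      fix x :: real assume x: "x \<in> {0..9/5}"
      have hx: "0 \<le> hh x" by (rule hh_nonneg) (use x in auto)
      have "(t - t0) * x \<le> (t - t0) * (9/5)" using x tt by (intro mult_left_mono) auto
      then have "w \<le> exp (-((t - t0)*x))" unfolding w_def by simp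
      then have "w * exp (-(t0*x)) * hh x \<le> exp (-((t - t0)*x)) * exp (-(t0*x)) * hh x"
        using hx by (intro mult_right_mono) auto
      then show "w * ?g t0 x \<le> ?g t x" unfolding fac by (simp add: algebra_simps)
    qed
    then show ?thesis by simp
  qed
  have pint: "(\<lambda>x. exp (-(t0*x)) * pp x) integrable_on {9/5..}" using PP_int[OF t0] by blast
  have pval: "integral {9/5..} (\<lambda>x. exp (-(t0*x)) * pp x) = PP" unfolding PP_def using PP_int[OF t0] by (rule integral_unique)
  have B: "w * (integral {9/5..} (?g t0) - PP) \<le> integral {9/5..} (?g t)"
  proof -
    have i1: "(\<lambda>x. ?g t0 x - exp (-(t0*x)) * pp x) integrable_on {9/5..}"
      by (rule integrable_diff[OF g_int[OF t0] pint])
    have "integral {9/5..} (\<lambda>x. w * (?g t0 x - exp (-(t0*x)) * pp x)) \<le> integral {9/5..} (?g t)"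
    proof (rule integral_le)
      show "(\<lambda>x. w * (?g t0 x - exp (-(t0*x)) * pp x)) integrable_on {9/5..}"
        using i1 by (rule integrable_on_mult_right)
      show "?g t integrable_on {9/5..}" by (rule g_int[OF t])
      fix x :: real assume x: "x \<in> {9/5..}"
      have hp: "hh x \<le> pp x" by (rule hh_le_pp) (use x in auto)
      have p0: "0 \<le> pp x" by (rule pp_pos)
      have "(t - t0) * (9/5) \<le> (t - t0) * x" using x tt by (intro mult_left_mono) auto
      then have v: "exp (-((t - t0)*x)) \<le> w" unfolding w_def by simp
      have e0: "0 < exp (-(t0*x))" by simp
      have "w * (hh x - pp x) \<le> exp (-((t - t0)*x)) * hh x"
      proof (cases "0 \<le> hh x")
        case True
        then have "w * (hh x - pp x) \<le> 0" using hp unfolding w_def by (simp add: mult_nonneg_nonpos)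
        also have "0 \<le> exp (-((t - t0)*x)) * hh x" using True by simp
        finally show ?thesis .
      next
        case False
        have "w * (hh x - pp x) \<le> w * hh x" using p0 unfolding w_def by simp
        also have "w * hh x \<le> exp (-((t - t0)*x)) * hh x" using False v by (intro mult_right_mono_neg) auto
        finally show ?thesis .
      qed
      then have "exp (-(t0*x)) * (w * (hh x - pp x)) \<le> exp (-(t0*x)) * (exp (-((t - t0)*x)) * hh x)"
        using e0 by (intro mult_left_mono) auto
      then show "w * (?g t0 x - exp (-(t0*x)) * pp x) \<le> ?g t x" unfolding fac by (simp add: algebra_simps)
    qed
    moreover have "integral {9/5..} (\<lambda>x. w * (?g t0 x - exp (-(t0*x)) * pp x)) = w * integral {9/5..} (\<lambda>x. ?g t0 x - exp (-(t0*x)) * pp x)"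
      by (rule integral_mult_right)
    moreover have "integral {9/5..} (\<lambda>x. ?g t0 x - exp (-(t0*x)) * pp x) = integral {9/5..} (?g t0) - PP"
      using integral_diff[OF g_int[OF t0] pint] pval by simp
    ultimately show ?thesis by simp
  qed
  have "arccot t - M t = integral {0..9/5} (?g t) + integral {9/5..} (?g t)"
    using D_eq[OF t] split[OF t] by simp
  moreover have "arccot t0 - M t0 = integral {0..9/5} (?g t0) + integral {9/5..} (?g t0)"
    using D_eq[OF t0] split[OF t0] by simp
  ultimately have "w * (arccot t0 - M t0 - PP) \<le> arccot t - M t"
    using A B by (simp add: algebra_simps)
  then show ?thesis unfolding w_def PP_def .
qed

lemma arccot_gt_pi4: "t < 1 \<Longrightarrow> pi/4 < arccot t"
  unfolding arccot_def using arctan_less_iff[of t 1] by (simp add: arctan_one)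

lemma arccot_antimono: "s \<le> t \<Longrightarrow> arccot t \<le> arccot s"
  unfolding arccot_def by (simp add: arctan_le_iff)

lemma exp_t0c: "exp (-((99/100::real)*(9/5))) \<le> (800319309/1000000000) ^ 8"
proof -
  have "exp (-((99/100::real)*(9/5))) = exp (- (891/4000)) ^ 8"
    by (simp add: exp_of_nat_mult[symmetric])
  also have "\<dots> \<le> (800319309/1000000000) ^ 8"
  proof (rule power_mono)
    have "exp (- (891/4000::real)) \<le> 1 - (891/4000::real) + (891/4000)^2/2 - (891/4000)^3/6 + (891/4000)^4/24"
      by (rule exp_le4) simp
    also have "\<dots> \<le> 800319309/1000000000" by (simp add: power_divide)
    finally show "exp (- (891/4000::real)) \<le> 800319309/1000000000" .
  qed simp
  finally show ?thesis .
qed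

lemma M_lt_arccot:
  fixes t :: real
  assumes t: "t > 99/100"
  shows "M t < arccot t"
proof -
  let ?t0 = "99/100::real"
  have M0: "M ?t0 \<le> 768411/1000000"
    using M_mono[of "49/50" ?t0] M_t1_bound by simp
  have a0: "pi/4 < arccot ?t0" by (rule arccot_gt_pi4) simp
  have pi: "3141592653588/1000000000000 \<le> pi" using pi_approx(1) by simp
  have PPb: "exp (-(?t0*(9/5))) * (1/(54*?t0) + (53/500)/(?t0+3)) \<le> (800319309/1000000000) ^ 8 * (1/(54*?t0) + (53/500)/(?t0+3))"
    using exp_t0c by (intro mult_right_mono) auto
  have num: "(800319309/1000000000::real) ^ 8 * (1/(54*?t0) + (53/500)/(?t0+3)) + 768411/1000000 < 3141592653588/1000000000000 / 4"
    by (simp add: power_divide)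
  have pos: "0 < arccot ?t0 - M ?t0 - exp (-(?t0*(9/5))) * (1/(54*?t0) + (53/500)/(?t0+3))"
    using M0 a0 pi PPb num by linarith
  have "0 < exp (-((t - ?t0)*(9/5))) * (arccot ?t0 - M ?t0 - exp (-(?t0*(9/5))) * (1/(54*?t0) + (53/500)/(?t0+3)))"
    using pos by simp
  also have "\<dots> \<le> arccot t - M t" by (rule sign_arg) (use t in auto)
  finally show ?thesis by simp
qed


lemma Si_0: "Si 0 = 0"
  unfolding Si_def by (simp add: zero_ereal_def)

lemma int_sinu:
  fixes t R :: real
  assumes "t \<le> R"
  shows "integral {t..R} (\<lambda>u. sin u / u) = Si R - Si t"
proof -
  have "integral {t..R} (\<lambda>u. sin u / u) = integral {t..R} sinc"
    by (rule integral_spike[of "{0}"]) auto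
  also have "\<dots> = Si R - Si t"
    by (rule ftc_integral[OF assms])
       (simp only: has_real_derivative_iff_has_vector_derivative[symmetric], rule DERIV_Si[THEN has_field_derivative_at_within])
  finally show ?thesis .
qed

lemma si_eq:
  fixes t :: real
  shows "si t = Si t - pi/2"
proof -
  have "((\<lambda>R. integral {t..R} (\<lambda>u. sin u / u)) \<longlongrightarrow> pi/2 - Si t) at_top"
  proof -
    have "((\<lambda>R. Si R - Si t) \<longlongrightarrow> pi/2 - Si t) at_top"
      by (intro tendsto_intros Si_at_top)
    moreover have "\<forall>\<^sub>F R in at_top. Si R - Si t = integral {t..R} (\<lambda>u. sin u / u)"
      using eventually_ge_at_top[of t] by eventually_elim (simp add: int_sinu)
    ultimately show ?thesis by (rule Lim_transform_eventually)
  qed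
  then have "Lim at_top (\<lambda>R. integral {t..R} (\<lambda>u. sin u / u)) = pi/2 - Si t"
    by (rule tendsto_Lim[OF trivial_limit_at_top_linorder])
  then show ?thesis unfolding si_def by simp
qed

lemma abs_si_le_E:
  fixes t :: real
  assumes t: "t > 0"
  shows "\<bar>si t\<bar> \<le> cmod (E t)"
proof -
  have l1: "((\<lambda>R. Im (exp (\<i> * complex_of_real t) * IE t R)) \<longlongrightarrow> Im (exp (\<i> * complex_of_real t) * LL t)) at_top"
    by (intro tendsto_intros IE_tendsto[OF t])
  have l2: "((\<lambda>R. Im (exp (\<i> * complex_of_real t) * IE t R)) \<longlongrightarrow> pi/2 - Si t) at_top"
  proof -
    have f: "filterlim (\<lambda>R::real. R + t) at_top at_top" by real_asymp
    have "((\<lambda>R. Si (R + t) - Si t) \<longlongrightarrow> pi/2 - Si t) at_top"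
      by (intro tendsto_intros filterlim_compose[OF Si_at_top f])
    moreover have "\<forall>\<^sub>F R in at_top. Si (R + t) - Si t = Im (exp (\<i> * complex_of_real t) * IE t R)"
      using eventually_ge_at_top[of 0] by eventually_elim (metis Im_IE[OF t])
    ultimately show ?thesis by (rule Lim_transform_eventually)
  qed
  have "Im (exp (\<i> * complex_of_real t) * LL t) = pi/2 - Si t"
    using tendsto_unique[OF trivial_limit_at_top_linorder l1 l2] .
  then have "\<bar>si t\<bar> = \<bar>Im (exp (\<i> * complex_of_real t) * LL t)\<bar>" by (simp add: si_eq)
  also have "\<dots> \<le> cmod (exp (\<i> * complex_of_real t) * LL t)" by (rule abs_Im_le_cmod)
  also have "\<dots> = cmod (E t)" by (simp add: norm_mult E_eq_LL[OF t])
  finally show ?thesis .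
qed

lemma Si_le_x:
  fixes t :: real
  assumes t: "0 \<le> t"
  shows "Si t \<le> t"
proof -
  have "(\<lambda>x. Si x - x) t \<le> (\<lambda>x. Si x - x) 0"
  proof (rule DERIV_nonpos_imp_nonincreasing[OF t])
    fix x :: real
    have "((\<lambda>x. Si x - x) has_real_derivative sinc x - 1) (at x)"
      by (rule DERIV_diff[OF DERIV_Si DERIV_ident])
    moreover have "sinc x - 1 \<le> 0" using abs_sinc_le[of x] by linarith
    ultimately show "\<exists>y. ((\<lambda>x. Si x - x) has_real_derivative y) (at x) \<and> y \<le> 0" by blast
  qed
  then show ?thesis by (simp add: Si_0)
qed

lemma Si_gt_arctan:
  fixes t :: real
  assumes t: "0 < t" "t \<le> 1"
  shows "arctan t < Si t"
proof -
  obtain z where z: "0 < z" "z < t" and eq: "(Si t - arctan t) - (Si 0 - arctan 0) = (t - 0) * (sinc z - 1 / (1 + z^2))"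
  proof -
    have "\<exists>z::real. 0 < z \<and> z < t \<and> ((\<lambda>x. Si x - arctan x) t - (\<lambda>x. Si x - arctan x) 0 = (t - 0) * (sinc z - 1 / (1 + z^2)))"
    proof (rule MVT2[OF t(1)])
      fix x :: real
      show "((\<lambda>x. Si x - arctan x) has_real_derivative sinc x - 1 / (1 + x^2)) (at x)"
        by (rule DERIV_cong[OF DERIV_diff[OF DERIV_Si DERIV_arctan]]) (simp add: inverse_eq_divide)
    qed
    then show ?thesis using that by auto
  qed
  have z1: "z \<le> 1" using z t by simp
  have "z - z^3/6 \<le> sin z" by (rule sin_ge3) (use z in simp)
  moreover have "z < (z - z^3/6) * (1 + z^2)"
  proof -
    have "(z - z^3/6) * (1 + z^2) = z + z^3 * (5 - z^2) / 6" by (simp add: field_simps power2_eq_square power3_eq_cube)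
    moreover have "z^2 \<le> 1" using z z1 by (simp add: power_le_one)
    then have "0 < z^3 * (5 - z^2) / 6" using z by simp
    ultimately show ?thesis by simp
  qed
  ultimately have "z < sin z * (1 + z^2)"
    by (smt (verit) mult_right_mono zero_le_power2)
  then have "1 / (1 + z^2) < sin z / z"
    using z by (simp add: field_simps add_pos_nonneg)
  then have "0 < sinc z - 1 / (1 + z^2)" using z by simp
  then have "0 < (Si t - arctan t) - (Si 0 - arctan 0)" unfolding eq using t by simp
  then show ?thesis by (simp add: Si_0)
qed

lemma E_lt_arccot:
  fixes t :: real
  assumes t: "t > 49/50"
  shows "cmod (E t) < arccot t"
proof (cases "t > 99/100")
  case True
  then have "cmod (E t) < M t" using E_eq_LL LL_lt_M t by simp
  also have "\<dots> < arccot t" by (rule M_lt_arccot[OF True])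
  finally show ?thesis .
next
  case False
  have tp: "t > 0" using t by simp
  have "cmod (E t) < M t" using E_eq_LL[OF tp] LL_lt_M[OF tp] by simp
  also have "M t \<le> M (49/50)" by (rule M_mono) (use t in auto)
  also have "\<dots> \<le> 768411/1000000" by (rule M_t1_bound)
  also have "\<dots> < pi/4" using pi_approx(1) by simp
  also have "\<dots> < arccot (99/100)" by (rule arccot_gt_pi4) simp
  also have "\<dots> \<le> arccot t" by (rule arccot_antimono) (use False in simp)
  finally show ?thesis .
qed

lemma part_c:
  fixes t :: real
  assumes t: "t \<ge> 0"
  shows "\<bar>si t\<bar> \<le> arccot t \<and> (\<bar>si t\<bar> = arccot t \<longleftrightarrow> t = 0)"
proof (cases "t = 0")
  case True
  then show ?thesis by (simp add: si_eq Si_0 arccot_def)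
next
  case False
  then have tp: "t > 0" using t by simp
  have "\<bar>si t\<bar> < arccot t"
  proof (cases "t > 49/50")
    case True
    then show ?thesis using abs_si_le_E[OF tp] E_lt_arccot[OF True] by linarith
  next
    case False
    have "Si t \<le> t" by (rule Si_le_x) (use t in simp)
    moreover have "t < pi/2" using False pi_gt3 by simp
    moreover have "arctan t < Si t" by (rule Si_gt_arctan) (use tp False in auto)
    ultimately show ?thesis by (simp add: si_eq arccot_def)
  qed
  then show ?thesis using False by simp
qed

theorem proposition3:
  shows "(\<forall>t::real. t > 0 \<longrightarrow> cmod (E t) < M t)
    \<and> (\<exists>t0 t1::real. 0 < t1 \<and> t1 < t0 \<and> t0 < 1
          \<and> (\<forall>t. t > t0 \<longrightarrow> M t < arccot t)
          \<and> (\<forall>t. t > t1 \<longrightarrow> cmod (E t) < arccot t))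
    \<and> (\<forall>t::real. t \<ge> 0 \<longrightarrow> \<bar>si t\<bar> \<le> arccot t \<and> (\<bar>si t\<bar> = arccot t \<longleftrightarrow> t = 0))"
proof (intro conjI allI impI)
  fix t :: real assume "t > 0"
  then show "cmod (E t) < M t" using E_eq_LL LL_lt_M by simp
next
  show "\<exists>t0 t1::real. 0 < t1 \<and> t1 < t0 \<and> t0 < 1
          \<and> (\<forall>t. t > t0 \<longrightarrow> M t < arccot t)
          \<and> (\<forall>t. t > t1 \<longrightarrow> cmod (E t) < arccot t)"
    by (rule exI[of _ "99/100"], rule exI[of _ "49/50"]) (auto intro: M_lt_arccot E_lt_arccot)
next
  fix t :: real assume "t \<ge> 0"
  then show "\<bar>si t\<bar> \<le> arccot t" using part_c by blast
next
  fix t :: real assume "t \<ge> 0"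
  then show "\<bar>si t\<bar> = arccot t \<longleftrightarrow> t = 0" using part_c by blast
qed

end
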